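(* Let $k\ge2$, $0<a<1$, $d\ge2$, and let $\{\eta_n\}_{n\ge0}\subset\mathbb{C}\setminus\{0\}$ satisfy $|\eta_n|\le a^{d^n}$ for all $n\ge0$. Let \[ F_n(z_1,\dots,z_k)=(\eta_n z_k,\ z_2^d+\eta_n z_1,\ z_3^d+\eta_n z_2,\ \dots,\ z_k^d+\eta_n z_{k-1}), \] $F(n)=F_n\circ\cdots\circ F_0$, and $\Omega_{\{F_n\}}=\{z\in\mathbb{C}^k: F(n)(z)\to0 \text{ as } n\to\infty\}$. Then: (i) $\Omega_{\{F_n\}}$ is a non-empty open connected set; (ii) $\Omega_{\{F_n\}}=\bigcup_{j\ge1}\Omega_j$ with $\Omega_j\subset\Omega_{j+1}$ and each $\Omega_j$ biholomorphic to the unit ball $B^k(0;1)$; (iii) the infinitesimal Kobayashi metric on $\Omega_{\{F_n\}}$ vanishes identically; (iv) there exists a plurisubharmonic function $\phi:\mathbb{C}^k\to[\log a,\infty)$ such that $\Omega_{\{F_n\}}=\{z\in\mathbb{C}^k:\phi(z)<0\}$. *)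

theory Defs
  imports "HOL-Analysis.Analysis"
begin

text \<open>Points of C^k are vectors of type complex^('k::{finite,linorder}), where the index type 'k is a finite
linear order with CARD('k) = k; its elements in increasing order play the role of the
coordinate indices 1, ..., k.\<close>

definition first_idx :: "'k::{finite,linorder}" where
  "first_idx = Min UNIV"

definition last_idx :: "'k::{finite,linorder}" where
  "last_idx = Max UNIV"

definition pred_idx :: "'k::{finite,linorder} \<Rightarrow> 'k" where
  "pred_idx i = Max {j. j < i}"

definition Fmap :: "complex \<Rightarrow> nat \<Rightarrow> complex^('k::{finite,linorder}) \<Rightarrow> complex^('k::{finite,linorder})" where
  "Fmap eta d z = (\<chi> i. if i = first_idx then eta * z $ last_idx
                        else (z $ i) ^ d + eta * z $ (pred_idx i))"

fun Fiter :: "(nat \<Rightarrow> complex) \<Rightarrow> nat \<Rightarrow> nat \<Rightarrow> complex^('k::{finite,linorder}) \<Rightarrow> complex^('k::{finite,linorder})" where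
  "Fiter eta d 0 = Fmap (eta 0) d"
| "Fiter eta d (Suc n) = Fmap (eta (Suc n)) d \<circ> Fiter eta d n"

definition basin :: "(nat \<Rightarrow> complex) \<Rightarrow> nat \<Rightarrow> (complex^('k::{finite,linorder})) set" where
  "basin eta d = {z. (\<lambda>n. Fiter eta d n z) \<longlonglongrightarrow> 0}"

definition cholo_on :: "(complex^'n) set \<Rightarrow> (complex^'n \<Rightarrow> complex^'m) \<Rightarrow> bool" where
  "cholo_on S f \<longleftrightarrow> (\<forall>z\<in>S. \<exists>f'. (f has_derivative f') (at z) \<and>
                         (\<forall>c v. f' (c *s v) = c *s f' v))"

definition biholomorphic :: "(complex^'n) set \<Rightarrow> (complex^'m) set \<Rightarrow> bool" where
  "biholomorphic U V \<longleftrightarrow> open U \<and> open V \<and>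
     (\<exists>f g. cholo_on U f \<and> cholo_on V g \<and> f ` U = V \<and> g ` V = U \<and>
            (\<forall>z\<in>U. g (f z) = z) \<and> (\<forall>w\<in>V. f (g w) = w))"

definition disc_holo_on :: "complex set \<Rightarrow> (complex \<Rightarrow> complex^'n) \<Rightarrow> bool" where
  "disc_holo_on D f \<longleftrightarrow> (\<forall>w\<in>D. \<exists>v. (f has_derivative (\<lambda>h. h *s v)) (at w))"

definition kobayashi :: "(complex^'n) set \<Rightarrow> complex^'n \<Rightarrow> complex^'n \<Rightarrow> real" where
  "kobayashi \<Omega> z v = Inf {\<alpha>::real. \<alpha> > 0 \<and>
     (\<exists>f. disc_holo_on (ball 0 1) f \<and> f ` ball 0 1 \<subseteq> \<Omega> \<and> f 0 = z \<and>
          (f has_derivative (\<lambda>h. h *s ((1 / \<alpha>) *\<^sub>R v))) (at 0)) }"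

definition usc :: "('a::topological_space \<Rightarrow> real) \<Rightarrow> bool" where
  "usc f \<longleftrightarrow> (\<forall>x t. f x < t \<longrightarrow> eventually (\<lambda>y. f y < t) (at x))"

definition psh :: "(complex^'n \<Rightarrow> real) \<Rightarrow> bool" where
  "psh \<phi> \<longleftrightarrow> usc \<phi> \<and>
     (\<forall>z w. (\<lambda>t. \<phi> (z + exp (\<i> * of_real t) *s w)) integrable_on {0..2*pi} \<and>
            \<phi> z \<le> (1 / (2*pi)) * integral {0..2*pi} (\<lambda>t. \<phi> (z + exp (\<i> * of_real t) *s w)))"

end

theory Submission
  imports Defs "HOL-Complex_Analysis.Cauchy_Integral_Formula" "HOL-Computational_Algebra.Fundamental_Theorem_Algebra"
begin


lemma vec_eqI: "(\<And>i. x $ i = y $ i) \<Longrightarrow> x = y"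
  by (simp add: vec_eq_iff)

lemma first_le: "first_idx \<le> (i::'k::{finite,linorder})"
  unfolding first_idx_def by simp
lemma last_ge: "(i::'k::{finite,linorder}) \<le> last_idx"
  unfolding last_idx_def by simp

lemma pred_less: "(i::'k::{finite,linorder}) \<noteq> first_idx \<Longrightarrow> pred_idx i < i"
proof -
  assume "i \<noteq> first_idx"
  then have "first_idx < i" using first_le[of i] by auto
  then have ne: "{j. j < i} \<noteq> {}" by blast
  show ?thesis unfolding pred_idx_def using Max_in[OF _ ne] by auto
qed

lemma pred_ge: "(j::'k::{finite,linorder}) < i \<Longrightarrow> j \<le> pred_idx i"
  unfolding pred_idx_def by (rule Max_ge) auto

lemma above_pred: "(i::'k::{finite,linorder}) \<noteq> first_idx \<Longrightarrow> {j. j > pred_idx i} = insert i {j. j > i}"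
proof -
  assume h: "i \<noteq> first_idx"
  have "pred_idx i < j \<longleftrightarrow> i \<le> j" for j
  proof
    assume a: "pred_idx i < j"
    show "i \<le> j"
    proof (rule ccontr)
      assume "\<not> i \<le> j" then have "j < i" by simp
      then have "j \<le> pred_idx i" by (rule pred_ge)
      with a show False by simp
    qed
  next
    assume "i \<le> j" then show "pred_idx i < j" using pred_less[OF h] by simp
  qed
  then show ?thesis unfolding set_eq_iff mem_Collect_eq insert_iff by (metis le_less)
qed



definition top_idx :: "nat \<Rightarrow> 'k::{finite,linorder}" where "top_idx n = (pred_idx ^^ n) last_idx"
definition ab :: "'k::{finite,linorder} \<Rightarrow> nat" where "ab i = card {j. j > i}"

lemma ab_last: "ab (last_idx::'k::{finite,linorder}) = 0"
proof -
  have "{j. j > (last_idx::'k)} = {}" using last_ge by (auto simp: not_less)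
  then show ?thesis unfolding ab_def by simp
qed

lemma ab_pred: "(i::'k::{finite,linorder}) \<noteq> first_idx \<Longrightarrow> ab (pred_idx i) = Suc (ab i)"
  unfolding ab_def by (simp add: above_pred)

lemma ab_less: "ab (i::'k::{finite,linorder}) < CARD('k)"
  unfolding ab_def by (rule psubset_card_mono) auto

lemma ab_mono: "(i::'k::{finite,linorder}) < j \<Longrightarrow> ab j < ab i"
  unfolding ab_def by (rule psubset_card_mono) auto

lemma ab_inj: "ab (i::'k::{finite,linorder}) = ab j \<Longrightarrow> i = j"
  by (metis ab_mono less_irrefl linorder_neqE)

lemma ab_first: "ab (first_idx::'k::{finite,linorder}) = CARD('k) - 1"
proof -
  have "{j. j > (first_idx::'k)} = UNIV - {first_idx}" using first_le by (auto simp: order.strict_iff_order)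
  then show ?thesis unfolding ab_def by (simp add: card_Diff_subset)
qed

lemma top_Suc: "top_idx (Suc n) = pred_idx (top_idx n)"
  unfolding top_idx_def by simp

lemma top_0: "top_idx 0 = last_idx"
  unfolding top_idx_def by simp

lemma ab_top: "n < CARD('k::{finite,linorder}) \<Longrightarrow> ab (top_idx n :: 'k) = n"
proof (induction n)
  case 0 then show ?case by (simp add: top_0 ab_last)
next
  case (Suc n)
  then have ih: "ab (top_idx n :: 'k) = n" by simp
  have "top_idx n \<noteq> (first_idx::'k)" using ih ab_first[where 'k='k] Suc.prems by auto
  then show ?case by (simp add: top_Suc ab_pred ih)
qed

lemma top_ab: "top_idx (ab i) = (i::'k::{finite,linorder})"
  by (rule ab_inj) (simp add: ab_top ab_less)

lemma top_ne_first: "Suc n < CARD('k::{finite,linorder}) \<Longrightarrow> top_idx n \<noteq> (first_idx::'k)"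
  using ab_top[of n, where 'k='k] ab_first[where 'k='k] by auto

fun vinv :: "complex \<Rightarrow> nat \<Rightarrow> complex^('k::{finite,linorder}) \<Rightarrow> nat \<Rightarrow> complex" where
  "vinv e d w 0 = w $ first_idx / e"
| "vinv e d w (Suc n) = (w $ top_idx n - (vinv e d w n) ^ d) / e"

definition Finv :: "complex \<Rightarrow> nat \<Rightarrow> complex^('k::{finite,linorder}) \<Rightarrow> complex^('k::{finite,linorder})" where
  "Finv e d w = (\<chi> i. vinv e d w (ab i))"

lemma Fmap_first: "Fmap e d z $ first_idx = e * z $ last_idx"
  unfolding Fmap_def by simp
lemma Fmap_other: "i \<noteq> first_idx \<Longrightarrow> Fmap e d z $ i = (z $ i) ^ d + e * z $ pred_idx i"
  unfolding Fmap_def by simp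

lemma Fmap_Finv: fixes w :: "complex^('k::{finite,linorder})"
  assumes e: "e \<noteq> 0" shows "Fmap e d (Finv e d w) = w"
proof (rule vec_eqI)
  fix i :: 'k
  show "Fmap e d (Finv e d w) $ i = w $ i"
  proof (cases "i = first_idx")
    case True then show ?thesis using e by (simp add: Fmap_first Finv_def ab_last)
  next
    case False
    then show ?thesis using e by (simp add: Fmap_other Finv_def ab_pred top_ab)
  qed
qed

lemma vinv_Fmap: fixes z :: "complex^('k::{finite,linorder})"
  shows "e \<noteq> 0 \<Longrightarrow> n < CARD('k) \<Longrightarrow> vinv e d (Fmap e d z) n = z $ top_idx n"
proof (induction n)
  case 0 then show ?case by (simp add: Fmap_first top_0)
next
  case (Suc n)
  have ne: "top_idx n \<noteq> (first_idx::'k)" using top_ne_first Suc.prems by blast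
  show ?case using Suc by (simp add: Fmap_other[OF ne] top_Suc)
qed

lemma Finv_Fmap: "e \<noteq> 0 \<Longrightarrow> Finv e d (Fmap e d z) = z"
  by (rule vec_eqI) (simp add: Finv_def vinv_Fmap ab_less top_ab)



lemma has_derivative_vecI:
  fixes f :: "'a::real_normed_vector \<Rightarrow> complex^'n"
  assumes "\<And>i. ((\<lambda>x. f x $ i) has_derivative (\<lambda>h. f' h $ i)) (at a)"
  shows "(f has_derivative f') (at a)"
proof -
  have "((\<lambda>x. f x \<bullet> b) has_derivative (\<lambda>h. f' h \<bullet> b)) (at a)" if b: "b \<in> Basis" for b
  proof -
    obtain j u where bu: "b = axis j u" "u \<in> Basis" using b unfolding Basis_vec_def by auto
    have "((\<lambda>x. (f x $ j) \<bullet> u) has_derivative (\<lambda>h. (f' h $ j) \<bullet> u)) (at a)"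
      by (rule has_derivative_inner_left[OF assms])
    then show ?thesis unfolding bu inner_axis .
  qed
  then show ?thesis using has_derivative_componentwise_within[of f f' a UNIV] by simp
qed

lemma vec_nth_deriv[derivative_intros]: "((\<lambda>x. x $ i) has_derivative (\<lambda>h. h $ i)) F"
  by (rule bounded_linear.has_derivative[OF bounded_linear_vec_nth]) (rule has_derivative_ident)

definition hv :: "(complex^'n \<Rightarrow> complex^'m) \<Rightarrow> complex^'n \<Rightarrow> bool" where
  "hv f z \<longleftrightarrow> (\<exists>f'. (f has_derivative f') (at z) \<and> (\<forall>c v. f' (c *s v) = c *s f' v))"

lemma cholo_on_hv: "cholo_on S f \<longleftrightarrow> (\<forall>z\<in>S. hv f z)"
  unfolding cholo_on_def hv_def by simp

lemma hv_comp: assumes "hv g (f z)" "hv f z" shows "hv (g \<circ> f) z"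
proof -
  obtain g' where g: "(g has_derivative g') (at (f z))" "\<forall>c v. g' (c *s v) = c *s g' v"
    using assms(1) unfolding hv_def by blast
  obtain f' where f: "(f has_derivative f') (at z)" "\<forall>c v. f' (c *s v) = c *s f' v"
    using assms(2) unfolding hv_def by blast
  show ?thesis unfolding hv_def
    by (rule exI[of _ "g' \<circ> f'"]) (use f g in \<open>auto intro: diff_chain_at\<close>)
qed

definition DF :: "complex \<Rightarrow> nat \<Rightarrow> complex^('k::{finite,linorder}) \<Rightarrow> complex^('k::{finite,linorder}) \<Rightarrow> complex^('k::{finite,linorder})" where
  "DF e d w h = (\<chi> i. if i = first_idx then e * h $ last_idx
                       else of_nat d * h $ i * (w $ i) ^ (d - 1) + e * h $ pred_idx i)"

lemma Fmap_deriv: "(Fmap e d has_derivative DF e d w) (at w)"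
proof (rule has_derivative_vecI)
  fix i :: 'a
  show "((\<lambda>x. Fmap e d x $ i) has_derivative (\<lambda>h. DF e d w h $ i)) (at w)"
  proof (cases "i = first_idx")
    case True
    have "((\<lambda>x. e * x $ last_idx) has_derivative (\<lambda>h. e * h $ last_idx)) (at w)"
      by (intro derivative_eq_intros) auto
    then show ?thesis using True by (simp add: Fmap_def DF_def)
  next
    case False
    have "((\<lambda>x. (x $ i) ^ d + e * x $ pred_idx i) has_derivative
        (\<lambda>h. of_nat d * h $ i * (w $ i) ^ (d - 1) + e * h $ pred_idx i)) (at w)"
      by (intro derivative_eq_intros) auto
    then show ?thesis using False by (simp add: Fmap_def DF_def)
  qed
qed

lemma DF_clin: "DF e d w (c *s v) = c *s DF e d w v"
  by (rule vec_eqI) (simp add: DF_def algebra_simps)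

lemma hv_Fmap: "hv (Fmap e d) w"
  unfolding hv_def using Fmap_deriv DF_clin by blast

fun dvinv :: "complex \<Rightarrow> nat \<Rightarrow> complex^('k::{finite,linorder}) \<Rightarrow> complex^('k::{finite,linorder}) \<Rightarrow> nat \<Rightarrow> complex" where
  "dvinv e d w h 0 = h $ first_idx / e"
| "dvinv e d w h (Suc n) = (h $ top_idx n - of_nat d * dvinv e d w h n * (vinv e d w n) ^ (d - 1)) / e"

lemma vinv_deriv: "((\<lambda>w. vinv e d w n) has_derivative (\<lambda>h. dvinv e d w h n)) (at w)"
proof (induction n)
  case 0
  show ?case
    by (simp add: divide_inverse, intro derivative_eq_intros) auto
next
  case (Suc n)
  show ?case
    using Suc.IH by (simp add: divide_inverse, intro derivative_eq_intros) auto
qed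

lemma dvinv_clin: "dvinv e d w (c *s v) n = c * dvinv e d w v n"
  by (induction n) (auto simp: algebra_simps)

lemma hv_Finv: "hv (Finv e d) w"
proof -
  have "(Finv e d has_derivative (\<lambda>h. \<chi> i. dvinv e d w h (ab i))) (at w)"
    unfolding Finv_def by (rule has_derivative_vecI) (simp add: vinv_deriv)
  moreover have "\<forall>c v. (\<chi> i. dvinv e d w (c *s v) (ab i)) = c *s (\<chi> i. dvinv e d w v (ab i))"
    by (auto intro!: vec_eqI simp: dvinv_clin)
  ultimately show ?thesis unfolding hv_def by blast
qed



definition Mx :: "complex^('k::finite) \<Rightarrow> real" where
  "Mx x = Max (range (\<lambda>i. cmod (x $ i)))"

lemma Mx_ge: "cmod (x $ i) \<le> Mx x"
  unfolding Mx_def by (rule Max_ge) auto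

lemma Mx_attained: "\<exists>i. Mx x = cmod (x $ i)"
proof -
  have "Mx x \<in> range (\<lambda>i. cmod (x $ i))" unfolding Mx_def by (rule Max_in) auto
  then show ?thesis by auto
qed

lemma Mx_le: "(\<And>i. cmod (x $ i) \<le> B) \<Longrightarrow> Mx x \<le> B"
  using Mx_attained[of x] by auto

lemma Mx_nonneg: "0 \<le> Mx x"
  using Mx_ge[of x] norm_ge_zero order_trans by blast

lemma Mx_le_norm: "Mx x \<le> norm x"
  using Mx_attained[of x] Finite_Cartesian_Product.norm_nth_le[of x] by metis

lemma norm_le_Mx: "norm (x::complex^('k::finite)) \<le> real CARD('k) * Mx x"
proof -
  have "norm x \<le> (\<Sum>i\<in>UNIV. norm (x $ i))" unfolding norm_vec_def by (rule L2_set_le_sum) simp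
  also have "\<dots> \<le> (\<Sum>i\<in>(UNIV::'k set). Mx x)" by (rule sum_mono) (simp add: Mx_ge)
  finally show ?thesis by simp
qed

lemma Mx_triangle: "Mx x \<le> Mx y + norm (x - y)"
proof (rule Mx_le)
  fix i
  have "cmod (x $ i) \<le> cmod (y $ i) + cmod ((x - y) $ i)"
    by (metis add.commute diff_add_cancel norm_triangle_ineq vector_minus_component)
  also have "\<dots> \<le> Mx y + norm (x - y)" using Mx_ge[of y i] Finite_Cartesian_Product.norm_nth_le[of "x - y" i] by simp
  finally show "cmod (x $ i) \<le> Mx y + norm (x - y)" .
qed

lemma continuous_Mx: "continuous_on S Mx"
proof -
  have "\<bar>Mx x - Mx y\<bar> \<le> norm (x - y)" for x y
    using Mx_triangle[of x y] Mx_triangle[of y x] by (simp add: norm_minus_commute)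
  then show ?thesis
    unfolding continuous_on_iff dist_real_def dist_norm by (meson le_less_trans)
qed

lemma Mx_Fmap: "Mx (Fmap e d (w::complex^('k::{finite,linorder}))) \<le> Mx w ^ d + cmod e * Mx w"
proof (rule Mx_le)
  fix i :: 'k
  have p: "cmod (w $ i) ^ d \<le> Mx w ^ d" by (rule power_mono[OF Mx_ge]) simp
  show "cmod (Fmap e d w $ i) \<le> Mx w ^ d + cmod e * Mx w"
  proof (cases "i = first_idx")
    case True
    have "cmod (e * w $ last_idx) \<le> cmod e * Mx w"
      by (simp add: norm_mult mult_left_mono Mx_ge)
    moreover have "0 \<le> Mx w ^ d" using Mx_nonneg[of w] by simp
    ultimately show ?thesis using True by (simp add: Fmap_first)
  next
    case False
    have "cmod ((w $ i) ^ d + e * w $ pred_idx i) \<le> cmod (w $ i) ^ d + cmod e * cmod (w $ pred_idx i)"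
      by (metis norm_mult norm_power norm_triangle_ineq)
    also have "\<dots> \<le> Mx w ^ d + cmod e * Mx w"
      using p by (intro add_mono mult_left_mono Mx_ge) auto
    finally show ?thesis using False by (simp add: Fmap_other)
  qed
qed

lemma Mx_DF: "Mx (DF e d w (h::complex^('k::{finite,linorder}))) \<le> (real d * Mx w ^ (d - 1) + cmod e) * Mx h"
proof (rule Mx_le)
  fix i :: 'k
  have p: "cmod (w $ i) ^ (d - 1) \<le> Mx w ^ (d - 1)" by (rule power_mono[OF Mx_ge]) simp
  have h0: "0 \<le> Mx h" "0 \<le> Mx w" by (rule Mx_nonneg)+
  show "cmod (DF e d w h $ i) \<le> (real d * Mx w ^ (d - 1) + cmod e) * Mx h"
  proof (cases "i = first_idx")
    case True
    have "cmod (e * h $ last_idx) \<le> cmod e * Mx h"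
      by (simp add: norm_mult mult_left_mono Mx_ge)
    also have "\<dots> \<le> (real d * Mx w ^ (d - 1) + cmod e) * Mx h"
      using h0 by (intro mult_right_mono) auto
    finally show ?thesis using True by (simp add: DF_def)
  next
    case False
    have "cmod (of_nat d * h $ i * (w $ i) ^ (d - 1) + e * h $ pred_idx i)
        \<le> real d * cmod (h $ i) * cmod (w $ i) ^ (d - 1) + cmod e * cmod (h $ pred_idx i)"
      by (metis (no_types, lifting) norm_mult norm_of_nat norm_power norm_triangle_ineq)
    also have "\<dots> \<le> real d * Mx h * Mx w ^ (d - 1) + cmod e * Mx h"
      using p h0 by (intro add_mono mult_left_mono mult_mono Mx_ge) auto
    finally show ?thesis using False by (simp add: DF_def algebra_simps)
  qed
qed

lemma Fmap_zero: "Fmap e d 0 = (0::complex^('k::{finite,linorder}))" if "d \<ge> 1"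
  using that by (intro vec_eqI) (simp add: Fmap_def)

lemma Fiter_Suc': "Fiter eta d (Suc n) z = Fmap (eta (Suc n)) d (Fiter eta d n z)"
  by simp



lemma contract:
  fixes w :: "complex^('k::{finite,linorder})"
  assumes d: "d \<ge> 2" and e: "cmod e \<le> 1 / (4 * real CARD('k))" and w: "norm w < 1 / (4 * real CARD('k))"
  shows "norm (Fmap e d w) \<le> norm w / 2"
proof -
  define K where "K = real CARD('k)"
  have K1: "K \<ge> 1" unfolding K_def by simp
  define M where "M = Mx w"
  have M0: "0 \<le> M" unfolding M_def by (rule Mx_nonneg)
  have Mw: "M \<le> norm w" unfolding M_def by (rule Mx_le_norm)
  have Mr: "M < 1 / (4 * K)" using Mw w K_def by simp
  have r1: "1 / (4 * K) \<le> 1" using K1 by simp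
  have "M ^ (d - 1) \<le> M ^ 1" by (rule power_decreasing) (use d M0 Mr r1 in auto)
  then have Md: "M ^ (d - 1) \<le> 1 / (4 * K)" using Mr by simp
  have "norm (Fmap e d w) \<le> K * Mx (Fmap e d w)" unfolding K_def by (rule norm_le_Mx)
  also have "\<dots> \<le> K * (M ^ d + cmod e * M)" unfolding M_def using K1 by (intro mult_left_mono Mx_Fmap) auto
  also have "M ^ d = M ^ (d - 1) * M" using d by (cases d) (auto simp: power_Suc2)
  also have "K * (M ^ (d - 1) * M + cmod e * M) = K * (M ^ (d - 1) + cmod e) * M" by (simp add: algebra_simps)
  also have "\<dots> \<le> K * (1 / (4 * K) + 1 / (4 * K)) * M"
    using Md e K1 M0 unfolding K_def by (intro mult_right_mono mult_left_mono add_mono) auto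
  also have "\<dots> = M / 2" using K1 by (simp add: field_simps)
  also have "\<dots> \<le> norm w / 2" using Mw by simp
  finally show ?thesis .
qed

locale dyn =
  fixes eta :: "nat \<Rightarrow> complex" and a :: real and d :: nat
  assumes a0: "0 < a" and a1: "a < 1" and d2: "d \<ge> 2"
    and eta0: "\<And>n. eta n \<noteq> 0" and etab: "\<And>n. cmod (eta n) \<le> a ^ (d ^ n)"
begin

lemma eta_small: "\<epsilon> > 0 \<Longrightarrow> \<exists>N. \<forall>n\<ge>N. cmod (eta n) \<le> \<epsilon>"
proof -
  assume \<epsilon>: "\<epsilon> > 0"
  obtain N where N: "a ^ N < \<epsilon>" using real_arch_pow_inv[OF \<epsilon> a1] by blast
  have "cmod (eta n) \<le> \<epsilon>" if "n \<ge> N" for n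
  proof -
    have "n \<le> d ^ n"
    proof -
      have "n < 2 ^ n" by (rule less_exp)
      also have "(2::nat) ^ n \<le> d ^ n" using d2 by (rule power_mono) simp
      finally show ?thesis by simp
    qed
    then have "a ^ (d ^ n) \<le> a ^ n" using a0 a1 by (intro power_decreasing) auto
    also have "\<dots> \<le> a ^ N" using a0 a1 that by (intro power_decreasing) auto
    finally show ?thesis using etab[of n] N by simp
  qed
  then show ?thesis by blast
qed

lemma d1: "d \<ge> 1" using d2 by simp

lemma G_zero: "Fiter eta d n 0 = (0::complex^('k::{finite,linorder}))"
  by (induction n) (simp_all add: Fmap_zero[OF d1])

definition rr :: "'k::{finite,linorder} itself \<Rightarrow> real" where
  "rr _ = 1 / (4 * real CARD('k))"

lemma rr_pos: "rr TYPE('k::{finite,linorder}) > 0"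
  unfolding rr_def by simp

definition good :: "'k::{finite,linorder} itself \<Rightarrow> nat \<Rightarrow> bool" where
  "good T N \<longleftrightarrow> (\<forall>n\<ge>N. cmod (eta n) \<le> rr T)"

lemma good_ex: "\<exists>N. good TYPE('k::{finite,linorder}) N"
  unfolding good_def using eta_small[OF rr_pos] by blast

lemma good_mono: "good T N \<Longrightarrow> N \<le> M \<Longrightarrow> good T M"
  unfolding good_def by auto

lemma iter_decay:
  fixes z :: "complex^('k::{finite,linorder})"
  assumes g: "good TYPE('k) N" and n: "n \<ge> N" and z: "norm (Fiter eta d n z) < rr TYPE('k)"
  shows "norm (Fiter eta d (n + m) z) \<le> (1/2) ^ m * norm (Fiter eta d n z)"
proof (induction m)
  case 0 then show ?case by simp
next
  case (Suc m)
  have lt: "norm (Fiter eta d (n + m) z) < rr TYPE('k)"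
  proof -
    have "(1/2::real) ^ m \<le> 1" by (rule power_le_one) auto
    then have "(1/2) ^ m * norm (Fiter eta d n z) \<le> norm (Fiter eta d n z)"
      by (simp add: mult_left_le_one_le)
    then show ?thesis using Suc.IH z by linarith
  qed
  have e: "cmod (eta (Suc (n + m))) \<le> 1 / (4 * real CARD('k))"
    using g n unfolding good_def rr_def by auto
  have "norm (Fiter eta d (n + Suc m) z) = norm (Fmap (eta (Suc (n + m))) d (Fiter eta d (n + m) z))"
    by simp
  also have "\<dots> \<le> norm (Fiter eta d (n + m) z) / 2"
    by (rule contract[OF d2 e]) (use lt in \<open>simp add: rr_def\<close>)
  also have "\<dots> \<le> (1/2) ^ Suc m * norm (Fiter eta d n z)" using Suc.IH by simp
  finally show ?case .
qed

lemma basin_tail: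
  fixes z :: "complex^('k::{finite,linorder})"
  assumes g: "good TYPE('k) N" and n: "n \<ge> N" and z: "norm (Fiter eta d n z) < rr TYPE('k)"
  shows "z \<in> basin eta d"
proof -
  have lim: "(\<lambda>m. (1/2::real) ^ m * norm (Fiter eta d n z)) \<longlonglongrightarrow> 0"
    by (intro tendsto_mult_left_zero LIMSEQ_realpow_zero) auto
  have "(\<lambda>m. Fiter eta d (m + n) z) \<longlonglongrightarrow> 0"
  proof (rule tendsto_norm_zero_cancel, rule Lim_null_comparison[OF _ lim])
    have "norm (Fiter eta d (m + n) z) \<le> (1/2) ^ m * norm (Fiter eta d n z)" for m
      using iter_decay[OF g n z, of m] by (simp add: add.commute)
    then show "\<forall>\<^sub>F m in sequentially. norm (norm (Fiter eta d (m + n) z)) \<le> (1/2) ^ m * norm (Fiter eta d n z)"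
      by simp
  qed
  then have "(\<lambda>m. Fiter eta d m z) \<longlonglongrightarrow> 0" by (rule LIMSEQ_offset)
  then show ?thesis unfolding basin_def by simp
qed

lemma basin_iff:
  fixes z :: "complex^('k::{finite,linorder})"
  assumes g: "good TYPE('k) N"
  shows "z \<in> basin eta d \<longleftrightarrow> (\<exists>n\<ge>N. norm (Fiter eta d n z) < rr TYPE('k))"
proof
  assume "z \<in> basin eta d"
  then have "(\<lambda>n. Fiter eta d n z) \<longlonglongrightarrow> 0" unfolding basin_def by simp
  then have "eventually (\<lambda>n. dist (Fiter eta d n z) 0 < rr TYPE('k)) sequentially"
    using tendstoD[OF _ rr_pos[where 'k='k]] by blast
  then have "eventually (\<lambda>n. norm (Fiter eta d n z) < rr TYPE('k)) sequentially"
    by (simp add: dist_norm)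
  then obtain M where "\<forall>n\<ge>M. norm (Fiter eta d n z) < rr TYPE('k)" unfolding eventually_sequentially by blast
  then show "\<exists>n\<ge>N. norm (Fiter eta d n z) < rr TYPE('k)" by (intro exI[of _ "max N M"]) auto
next
  assume "\<exists>n\<ge>N. norm (Fiter eta d n z) < rr TYPE('k)"
  then show "z \<in> basin eta d" using basin_tail[OF g] by blast
qed

end


lemma scaleR_vec_smult: "c *\<^sub>R (a *s (v::complex^'n)) = a *s (c *\<^sub>R v)"
  by (rule vec_eqI) (simp add: scaleR_conv_of_real)

lemma hv_scaleR: "hv f z \<Longrightarrow> hv (\<lambda>x. c *\<^sub>R f x) z"
  unfolding hv_def
proof (elim exE conjE)
  fix f' assume f: "(f has_derivative f') (at z)" "\<forall>a v. f' (a *s v) = a *s f' v"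
  show "\<exists>f'. ((\<lambda>x. c *\<^sub>R f x) has_derivative f') (at z) \<and> (\<forall>a v. f' (a *s v) = a *s f' v)"
    by (rule exI[of _ "\<lambda>h. c *\<^sub>R f' h"]) (use f in \<open>auto intro: derivative_intros simp: scaleR_vec_smult\<close>)
qed

lemma hv_scale_in: "hv (\<lambda>y::complex^'n. c *\<^sub>R y) z"
  unfolding hv_def
  by (rule exI[of _ "\<lambda>h. c *\<^sub>R h"]) (auto intro: derivative_eq_intros simp: scaleR_vec_smult)

lemma hv_continuous: "hv f z \<Longrightarrow> continuous (at z) f"
  unfolding hv_def using has_derivative_continuous by blast

lemma hv_continuous_on: "(\<And>z. hv f z) \<Longrightarrow> continuous_on S f"
  by (simp add: continuous_at_imp_continuous_on hv_continuous)

fun Ginv0 :: "(nat \<Rightarrow> complex) \<Rightarrow> nat \<Rightarrow> nat \<Rightarrow> complex^('k::{finite,linorder}) \<Rightarrow> complex^('k::{finite,linorder})" where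
  "Ginv0 eta d 0 = Finv (eta 0) d"
| "Ginv0 eta d (Suc n) = Ginv0 eta d n \<circ> Finv (eta (Suc n)) d"

context dyn begin

abbreviation "Ginv \<equiv> Ginv0 eta d"

lemma Ginv_G: "Ginv n (Fiter eta d n z) = z"
  by (induction n arbitrary: z) (simp_all add: Finv_Fmap eta0)

lemma G_Ginv: "Fiter eta d n (Ginv n y) = y"
  by (induction n arbitrary: y) (simp_all add: Fmap_Finv eta0)

lemma hv_G: "hv (Fiter eta d n) z"
proof (induction n arbitrary: z)
  case 0 then show ?case by (simp add: hv_Fmap)
next
  case (Suc n) show ?case using hv_comp[OF hv_Fmap Suc.IH] by (simp add: o_def)
qed

lemma hv_Ginv: "hv (Ginv n) z"
proof (induction n arbitrary: z)
  case 0 then show ?case by (simp add: hv_Finv)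
next
  case (Suc n) show ?case using hv_comp[OF Suc.IH hv_Finv] by (simp add: o_def)
qed

lemma cont_G: "continuous_on S (Fiter eta d n)"
  by (rule hv_continuous_on) (rule hv_G)

lemma cont_Ginv: "continuous_on S (Ginv n)"
  by (rule hv_continuous_on) (rule hv_Ginv)

definition Om :: "'k::{finite,linorder} itself \<Rightarrow> nat \<Rightarrow> nat \<Rightarrow> (complex^('k::{finite,linorder})) set" where
  "Om T N j = {z. norm (Fiter eta d (N + j) z) < rr T}"

lemma Om_open: "open (Om TYPE('k::{finite,linorder}) N j)"
  unfolding Om_def
  by (rule open_Collect_less) (auto intro: continuous_on_norm cont_G)

lemma Om_zero: "(0::complex^('k::{finite,linorder})) \<in> Om TYPE('k) N j"
  unfolding Om_def by (simp add: G_zero rr_pos)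

lemma Om_mono:
  assumes g: "good TYPE('k::{finite,linorder}) N"
  shows "Om TYPE('k) N j \<subseteq> Om TYPE('k) N (Suc j)"
proof
  fix z :: "complex^('k::{finite,linorder})" assume z: "z \<in> Om TYPE('k) N j"
  have "norm (Fiter eta d (N + j + 1) z) \<le> (1/2) ^ 1 * norm (Fiter eta d (N + j) z)"
    by (rule iter_decay[OF g]) (use z in \<open>auto simp: Om_def\<close>)
  then show "z \<in> Om TYPE('k) N (Suc j)" using z rr_pos[where 'k='k] unfolding Om_def by auto
qed

lemma Om_union:
  assumes g: "good TYPE('k::{finite,linorder}) N"
  shows "(basin eta d :: (complex^('k::{finite,linorder})) set) = (\<Union>j\<in>{1..}. Om TYPE('k) N j)"
proof
  show "(basin eta d :: (complex^('k::{finite,linorder})) set) \<subseteq> (\<Union>j\<in>{1..}. Om TYPE('k) N j)"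
  proof
    fix z :: "complex^('k::{finite,linorder})" assume "z \<in> basin eta d"
    then obtain n where n: "n \<ge> N" "norm (Fiter eta d n z) < rr TYPE('k)" using basin_iff[OF g] by blast
    have "norm (Fiter eta d (n + 1) z) \<le> (1/2) ^ 1 * norm (Fiter eta d n z)"
      by (rule iter_decay[OF g n])
    then have "norm (Fiter eta d (N + (n + 1 - N)) z) < rr TYPE('k)" using n rr_pos[where 'k='k] by simp
    then show "z \<in> (\<Union>j\<in>{1..}. Om TYPE('k) N j)" using n(1) unfolding Om_def by (intro UN_I[of "n + 1 - N"]) auto
  qed
next
  show "(\<Union>j\<in>{1..}. Om TYPE('k) N j) \<subseteq> basin eta d"
  proof
    fix z assume "z \<in> (\<Union>j\<in>{1..}. Om TYPE('k) N j)"
    then obtain j where "norm (Fiter eta d (N + j) z) < rr TYPE('k)" unfolding Om_def by auto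
    then show "z \<in> basin eta d" using basin_tail[OF g, of "N + j" z] by simp
  qed
qed

lemma Om_biholo:
  "biholomorphic (Om TYPE('k::{finite,linorder}) N j) (ball (0::complex^('k::{finite,linorder})) 1)"
proof -
  define r where "r = rr TYPE('k)"
  have r: "r > 0" unfolding r_def by (rule rr_pos)
  define f where "f = (\<lambda>x::complex^('k::{finite,linorder}). (1 / r) *\<^sub>R Fiter eta d (N + j) x)"
  define g where "g = (\<lambda>y::complex^('k::{finite,linorder}). Ginv (N + j) (r *\<^sub>R y))"
  have Om: "Om TYPE('k) N j = {z. norm (Fiter eta d (N + j) z) < r}" unfolding Om_def r_def ..
  have cf: "cholo_on (Om TYPE('k) N j) f" unfolding cholo_on_hv f_def by (auto intro: hv_scaleR hv_G)
  have cg: "cholo_on (ball 0 1) g"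
  proof -
    have "hv (Ginv (N + j) \<circ> (\<lambda>y. r *\<^sub>R y)) y" for y :: "complex^('k::{finite,linorder})"
      by (rule hv_comp[OF hv_Ginv hv_scale_in])
    then show ?thesis unfolding cholo_on_hv g_def by (simp add: o_def)
  qed
  have gf: "g (f z) = z" for z unfolding f_def g_def using r by (simp add: Ginv_G)
  have fg: "f (g w) = w" for w unfolding f_def g_def using r by (simp add: G_Ginv)
  have fin: "f z \<in> ball 0 1" if "z \<in> Om TYPE('k) N j" for z
    using that r unfolding Om f_def by (simp add: divide_simps)
  have gin: "g w \<in> Om TYPE('k) N j" if "w \<in> ball 0 1" for w
    using that r unfolding Om g_def by (simp add: G_Ginv)
  have im1: "f ` Om TYPE('k) N j = ball 0 1"
  proof
    show "f ` Om TYPE('k) N j \<subseteq> ball 0 1" using fin by auto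
    show "ball 0 1 \<subseteq> f ` Om TYPE('k) N j" using gin fg by (metis image_eqI subsetI)
  qed
  have im2: "g ` ball 0 1 = Om TYPE('k) N j"
  proof
    show "g ` ball 0 1 \<subseteq> Om TYPE('k) N j" using gin by auto
    show "Om TYPE('k) N j \<subseteq> g ` ball 0 1" using fin gf by (metis image_eqI subsetI)
  qed
  show ?thesis unfolding biholomorphic_def
    using Om_open cf cg im1 im2 gf fg by (intro conjI exI[of _ f] exI[of _ g]) auto
qed

lemma Om_image: "Om TYPE('k::{finite,linorder}) N j = (\<lambda>y. Ginv (N + j) (rr TYPE('k) *\<^sub>R y)) ` ball (0::complex^('k::{finite,linorder})) 1"
proof -
  define r where "r = rr TYPE('k)"
  have r: "r > 0" unfolding r_def by (rule rr_pos)
  have "Om TYPE('k) N j = (\<lambda>y. Ginv (N + j) (r *\<^sub>R y)) ` ball (0::complex^('k::{finite,linorder})) 1"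
  proof
    show "Om TYPE('k) N j \<subseteq> (\<lambda>y. Ginv (N + j) (r *\<^sub>R y)) ` ball 0 1"
    proof
      fix z assume z: "z \<in> Om TYPE('k) N j"
      have "z = Ginv (N + j) (r *\<^sub>R ((1 / r) *\<^sub>R Fiter eta d (N + j) z))" using r by (simp add: Ginv_G)
      moreover have "(1 / r) *\<^sub>R Fiter eta d (N + j) z \<in> ball 0 1"
        using z r unfolding Om_def r_def[symmetric] by (simp add: divide_simps)
      ultimately show "z \<in> (\<lambda>y. Ginv (N + j) (r *\<^sub>R y)) ` ball 0 1" by blast
    qed
    show "(\<lambda>y. Ginv (N + j) (r *\<^sub>R y)) ` ball 0 1 \<subseteq> Om TYPE('k) N j"
      using r unfolding Om_def r_def[symmetric] by (auto simp: G_Ginv)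
  qed
  then show ?thesis unfolding r_def .
qed

lemma Om_connected: "connected (Om TYPE('k::{finite,linorder}) N j)"
proof -
  have "continuous_on (ball 0 1) (\<lambda>y::complex^('k::{finite,linorder}). Ginv (N + j) (rr TYPE('k) *\<^sub>R y))"
    by (intro continuous_on_compose2[OF cont_Ginv] continuous_intros) auto
  then show ?thesis unfolding Om_image[of N j] by (rule connected_continuous_image) simp
qed

lemma part12:
  "(open (basin eta d :: (complex^('k::{finite,linorder})) set) \<and> connected (basin eta d :: (complex^('k::{finite,linorder})) set)
            \<and> (basin eta d :: (complex^('k::{finite,linorder})) set) \<noteq> {})
       \<and> (\<exists>\<Omega>j :: nat \<Rightarrow> (complex^('k::{finite,linorder})) set.
            (basin eta d = (\<Union>j\<in>{1..}. \<Omega>j j)) \<and> (\<forall>j\<ge>1. \<Omega>j j \<subseteq> \<Omega>j (Suc j))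
            \<and> (\<forall>j\<ge>1. biholomorphic (\<Omega>j j) (ball (0::complex^('k::{finite,linorder})) 1)))"
proof -
  obtain N where g: "good TYPE('k) N" using good_ex by blast
  have U: "(basin eta d :: (complex^('k::{finite,linorder})) set) = (\<Union>j\<in>{1..}. Om TYPE('k) N j)" by (rule Om_union[OF g])
  have "open (basin eta d :: (complex^('k::{finite,linorder})) set)" unfolding U using Om_open by (intro open_UN) auto
  moreover have "connected (basin eta d :: (complex^('k::{finite,linorder})) set)" unfolding U
  proof (rule connected_Union)
    show "\<And>S. S \<in> Om TYPE('k) N ` {1..} \<Longrightarrow> connected S" using Om_connected by auto
    show "\<Inter> (Om TYPE('k) N ` {1..}) \<noteq> {}" using Om_zero[where 'k='k] by blast
  qed
  moreover have "(basin eta d :: (complex^('k::{finite,linorder})) set) \<noteq> {}" unfolding U using Om_zero by blast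
  moreover have "\<exists>\<Omega>j :: nat \<Rightarrow> (complex^('k::{finite,linorder})) set.
            (basin eta d = (\<Union>j\<in>{1..}. \<Omega>j j)) \<and> (\<forall>j\<ge>1. \<Omega>j j \<subseteq> \<Omega>j (Suc j))
            \<and> (\<forall>j\<ge>1. biholomorphic (\<Omega>j j) (ball (0::complex^('k::{finite,linorder})) 1))"
    by (rule exI[of _ "Om TYPE('k) N"]) (use U Om_mono[OF g] Om_biholo in auto)
  ultimately show ?thesis by blast
qed

end


lemma norm_smult_vec: "norm (h *s (u::complex^'n)) = cmod h * norm u"
  unfolding norm_vec_def by (simp add: norm_mult L2_set_right_distrib)

lemma scaleR_as_smult: "c *\<^sub>R (x::complex^'n) = complex_of_real c *s x"
  by (rule vec_eqI) (subst vector_scaleR_component, simp add: scaleR_conv_of_real)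

lemma line_deriv: "((\<lambda>h::complex. p + h *s (u::complex^'n)) has_derivative (\<lambda>h. h *s u)) (at w)"
proof -
  have "((\<lambda>h::complex. h *s u) has_derivative (\<lambda>h. h *s u)) (at w)"
    by (rule has_derivative_vecI) (auto intro!: derivative_eq_intros)
  then show ?thesis by (intro derivative_eq_intros) auto
qed

fun DGit :: "(nat \<Rightarrow> complex) \<Rightarrow> nat \<Rightarrow> nat \<Rightarrow> complex^('k::{finite,linorder}) \<Rightarrow> complex^('k::{finite,linorder}) \<Rightarrow> complex^('k::{finite,linorder})" where
  "DGit eta d 0 z = DF (eta 0) d z"
| "DGit eta d (Suc n) z = DF (eta (Suc n)) d (Fiter eta d n z) \<circ> DGit eta d n z"

lemma DGit_deriv: "(Fiter eta d n has_derivative DGit eta d n z) (at z)"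
proof (induction n)
  case 0 then show ?case by (simp add: Fmap_deriv)
next
  case (Suc n)
  show ?case using diff_chain_at[OF Suc.IH Fmap_deriv[of "eta (Suc n)" d]] by (simp add: o_def)
qed

lemma seq_zero:
  fixes x q :: "nat \<Rightarrow> real"
  assumes x0: "\<And>n. x n \<ge> 0" and rec: "\<And>n. x (Suc n) \<le> q n * x n" and q: "q \<longlonglongrightarrow> 0"
  shows "x \<longlonglongrightarrow> 0"
proof -
  have "eventually (\<lambda>n. dist (q n) 0 < 1/2) sequentially" using tendstoD[OF q, of "1/2"] by simp
  then obtain n0 where n0: "\<And>n. n \<ge> n0 \<Longrightarrow> q n \<le> 1/2" unfolding eventually_sequentially dist_real_def
    by (metis abs_less_iff diff_zero less_eq_real_def)
  have b: "x (m + n0) \<le> (1/2) ^ m * x n0" for m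
  proof (induction m)
    case 0 then show ?case by simp
  next
    case (Suc m)
    have "x (Suc m + n0) \<le> q (m + n0) * x (m + n0)" using rec[of "m + n0"] by simp
    also have "\<dots> \<le> 1/2 * x (m + n0)" using n0[of "m + n0"] x0[of "m + n0"] by (intro mult_right_mono) auto
    also have "\<dots> \<le> (1/2) ^ Suc m * x n0" using Suc.IH by simp
    finally show ?case .
  qed
  have lim: "(\<lambda>m. (1/2::real) ^ m * x n0) \<longlonglongrightarrow> 0"
    by (intro tendsto_mult_left_zero LIMSEQ_realpow_zero) auto
  have "(\<lambda>m. x (m + n0)) \<longlonglongrightarrow> 0"
    by (rule Lim_null_comparison[OF _ lim]) (use b x0 in \<open>auto intro!: always_eventually\<close>)
  then show ?thesis by (rule LIMSEQ_offset)
qed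

context dyn begin

lemma eta_le: "cmod (eta n) \<le> a ^ n"
proof -
  have "n \<le> d ^ n"
  proof -
    have "n < 2 ^ n" by (rule less_exp)
    also have "(2::nat) ^ n \<le> d ^ n" using d2 by (rule power_mono) simp
    finally show ?thesis by simp
  qed
  then have "a ^ (d ^ n) \<le> a ^ n" using a0 a1 by (intro power_decreasing) auto
  then show ?thesis using etab[of n] by simp
qed

lemma eta_lim: "(\<lambda>n. cmod (eta n)) \<longlonglongrightarrow> 0"
  by (rule Lim_null_comparison[OF _ LIMSEQ_realpow_zero[of a]]) (use eta_le a0 a1 in auto)

lemma DG_lim:
  fixes z :: "complex^('k::{finite,linorder})"
  assumes z: "z \<in> basin eta d"
  shows "(\<lambda>n. DGit eta d n z v) \<longlonglongrightarrow> 0"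
proof -
  have Gz: "(\<lambda>n. Fiter eta d n z) \<longlonglongrightarrow> 0" using z unfolding basin_def by simp
  define q where "q n = real d * Mx (Fiter eta d n z) ^ (d - 1) + cmod (eta (Suc n))" for n
  have MG: "(\<lambda>n. Mx (Fiter eta d n z)) \<longlonglongrightarrow> 0"
    by (rule Lim_null_comparison[OF _ tendsto_norm_zero[OF Gz]]) (auto intro!: always_eventually simp: Mx_nonneg Mx_le_norm)
  have "q \<longlonglongrightarrow> real d * 0 ^ (d - 1) + 0" unfolding q_def
    by (intro tendsto_intros MG LIMSEQ_Suc[OF eta_lim])
  then have q: "q \<longlonglongrightarrow> 0" using d2 by (simp add: power_0_left)
  have "(\<lambda>n. Mx (DGit eta d n z v)) \<longlonglongrightarrow> 0"
  proof (rule seq_zero[OF Mx_nonneg _ q])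
    fix n show "Mx (DGit eta d (Suc n) z v) \<le> q n * Mx (DGit eta d n z v)"
      using Mx_DF[of "eta (Suc n)" d "Fiter eta d n z" "DGit eta d n z v"] unfolding q_def by simp
  qed
  then have "(\<lambda>n. real CARD('k) * Mx (DGit eta d n z v)) \<longlonglongrightarrow> 0"
    by (intro tendsto_mult_right_zero)
  then have "(\<lambda>n. norm (DGit eta d n z v)) \<longlonglongrightarrow> 0"
    by (rule Lim_null_comparison[rotated]) (auto intro!: always_eventually norm_le_Mx)
  then show ?thesis by (rule tendsto_norm_zero_cancel)
qed

lemma kob_small:
  fixes z :: "complex^('k::{finite,linorder})"
  assumes z: "z \<in> basin eta d" and \<epsilon>: "\<epsilon> > 0"
  shows "\<exists>f. disc_holo_on (ball 0 1) f \<and> f ` ball 0 1 \<subseteq> basin eta d \<and> f 0 = z \<and>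
          (f has_derivative (\<lambda>h. h *s ((1 / \<epsilon>) *\<^sub>R v))) (at 0)"
proof -
  define r where "r = rr TYPE('k)"
  have r: "r > 0" unfolding r_def by (rule rr_pos)
  obtain N where g: "good TYPE('k) N" using good_ex by blast
  have Gz: "(\<lambda>n. Fiter eta d n z) \<longlonglongrightarrow> 0" using z unfolding basin_def by simp
  have e1: "eventually (\<lambda>n. dist (Fiter eta d n z) 0 < r / 2) sequentially" using tendstoD[OF Gz, of "r/2"] r by simp
  have e2: "eventually (\<lambda>n. dist (DGit eta d n z v) 0 < \<epsilon> * r / 2) sequentially"
    using tendstoD[OF DG_lim[OF z], of "\<epsilon> * r / 2"] r \<epsilon> by simp
  obtain n where n: "n \<ge> N" "norm (Fiter eta d n z) < r / 2" "norm (DGit eta d n z v) < \<epsilon> * r / 2"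
  proof -
    obtain M where "\<forall>m\<ge>M. dist (Fiter eta d m z) 0 < r / 2 \<and> dist (DGit eta d m z v) 0 < \<epsilon> * r / 2"
      using eventually_conj[OF e1 e2] unfolding eventually_sequentially by blast
    then show ?thesis using that[of "max N M"] by (auto simp: dist_norm)
  qed
  define p where "p = Fiter eta d n z"
  define u where "u = (1 / \<epsilon>) *\<^sub>R DGit eta d n z v"
  have nu: "norm u < r / 2" using n(3) \<epsilon> unfolding u_def by (simp add: field_simps)
  define f where "f = (\<lambda>h::complex. Ginv n (p + h *s u))"
  obtain D where D: "(Ginv n has_derivative D) (at p)" "\<forall>c w. D (c *s w) = c *s D w"
    using hv_Ginv[of n p] unfolding hv_def by blast
  have DD: "D (DGit eta d n z v) = v"
  proof -
    have c: "((Ginv n \<circ> Fiter eta d n) has_derivative (D \<circ> DGit eta d n z)) (at z)"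
      by (rule diff_chain_at[OF DGit_deriv]) (use D(1) in \<open>simp add: p_def\<close>)
    have eq: "(Ginv n \<circ> Fiter eta d n) = (\<lambda>x. x)" by (rule ext) (simp add: Ginv_G)
    from c have "((\<lambda>x. x) has_derivative (D \<circ> DGit eta d n z)) (at z)" by (simp only: eq)
    then have "D \<circ> DGit eta d n z = (\<lambda>x. x)" using has_derivative_ident has_derivative_unique by blast
    then show ?thesis by (metis comp_apply)
  qed
  have Du: "D u = (1 / \<epsilon>) *\<^sub>R v"
    unfolding u_def scaleR_as_smult using D(2) DD by simp
  have hol: "(f has_derivative (\<lambda>h. h *s D' u)) (at w)"
    if D': "(Ginv n has_derivative D') (at (p + w *s u))" "\<forall>c x. D' (c *s x) = c *s D' x" for w D'
  proof -
    have "(f has_derivative (D' \<circ> (\<lambda>h. h *s u))) (at w)"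
      unfolding f_def using diff_chain_at[OF line_deriv D'(1)] by (simp add: o_def)
    moreover have "(D' \<circ> (\<lambda>h. h *s u)) = (\<lambda>h. h *s D' u)" using D'(2) by (simp add: o_def)
    ultimately show ?thesis by simp
  qed
  have "disc_holo_on (ball 0 1) f"
    unfolding disc_holo_on_def
  proof
    fix w :: complex assume "w \<in> ball 0 1"
    obtain D' where D': "(Ginv n has_derivative D') (at (p + w *s u))" "\<forall>c x. D' (c *s x) = c *s D' x"
      using hv_Ginv[of n "p + w *s u"] unfolding hv_def by blast
    show "\<exists>v. (f has_derivative (\<lambda>h. h *s v)) (at w)" using hol[OF D'] by blast
  qed
  moreover have "f ` ball 0 1 \<subseteq> basin eta d"
  proof
    fix y assume "y \<in> f ` ball 0 1"
    then obtain h where h: "cmod h < 1" "y = f h" by auto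
    have Gy: "Fiter eta d n y = p + h *s u" unfolding h f_def by (simp add: G_Ginv)
    have "norm (p + h *s u) \<le> norm p + cmod h * norm u"
      using norm_triangle_ineq[of p "h *s u"] by (simp add: norm_smult_vec)
    also have "\<dots> \<le> norm p + norm u" using h(1) by (intro add_left_mono mult_left_le_one_le) auto
    also have "\<dots> < r" using n(2) nu unfolding p_def by simp
    finally show "y \<in> basin eta d" using basin_tail[OF g n(1), of y] Gy unfolding r_def by simp
  qed
  moreover have "f 0 = z" unfolding f_def p_def by (simp add: Ginv_G)
  moreover have "(f has_derivative (\<lambda>h. h *s ((1 / \<epsilon>) *\<^sub>R v))) (at 0)"
    using hol[of D 0] D Du by simp
  ultimately show ?thesis by blast
qed

lemma part3:
  fixes z :: "complex^('k::{finite,linorder})"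
  assumes z: "z \<in> basin eta d"
  shows "kobayashi (basin eta d) z v = 0"
proof -
  define S where "S = {\<alpha>::real. \<alpha> > 0 \<and>
     (\<exists>f. disc_holo_on (ball 0 1) f \<and> f ` ball 0 1 \<subseteq> basin eta d \<and> f 0 = z \<and>
          (f has_derivative (\<lambda>h. h *s ((1 / \<alpha>) *\<^sub>R v))) (at 0)) }"
  have inS: "\<epsilon> \<in> S" if "\<epsilon> > 0" for \<epsilon> unfolding S_def using kob_small[OF z that] that by blast
  have bdd: "bdd_below S" unfolding S_def by (rule bdd_belowI[of _ 0]) auto
  have ne: "S \<noteq> {}" using inS[of 1] by auto
  have "0 \<le> Inf S" by (rule cInf_greatest[OF ne]) (simp add: S_def less_imp_le)
  moreover have "Inf S \<le> \<epsilon>" if "\<epsilon> > 0" for \<epsilon> using cInf_lower[OF inS[OF that] bdd] .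
  ultimately have "Inf S = 0" by (metis dense not_le order.antisym)
  then show ?thesis unfolding kobayashi_def S_def .
qed

end


lemma mean_value_holo:
  fixes g :: "complex \<Rightarrow> complex"
  assumes contf: "continuous_on (cball 0 1) g" and holf: "g holomorphic_on ball 0 1"
  shows "((\<lambda>t. g (cis t)) has_integral (2 * pi * g 0)) {0..2*pi}"
proof -
  have "((\<lambda>u. g u / (u - 0)) has_contour_integral (2 * of_real pi * \<i> * g 0)) (circlepath 0 1)"
    by (rule Cauchy_integral_circlepath[OF contf holf]) simp
  then have "((\<lambda>t. g (0 + 1 * cis t) / (0 + 1 * cis t - 0) * 1 * \<i> * cis t) has_integral (2 * of_real pi * \<i> * g 0)) {0..2*pi}"
    unfolding circlepath_def by (subst (asm) has_contour_integral_part_circlepath_iff) auto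
  then have "((\<lambda>t. \<i> * g (cis t)) has_integral (\<i> * (2 * pi * g 0))) {0..2*pi}"
    by (simp add: field_simps cis_neq_zero)
  then have "((\<lambda>t. (- \<i>) * (\<i> * g (cis t))) has_integral ((- \<i>) * (\<i> * (2 * pi * g 0)))) {0..2*pi}"
    by (rule has_integral_mult_right)
  then show ?thesis by simp
qed

lemma log_mean_zero:
  fixes c :: complex assumes c: "cmod c < 1"
  shows "((\<lambda>t. ln (cmod (1 - c * cis t))) has_integral 0) {0..2*pi}"
proof -
  define g where "g = (\<lambda>\<zeta>. Ln (1 - c * \<zeta>))"
  have pos: "0 < Re (1 - c * \<zeta>)" if "\<zeta> \<in> cball 0 1" for \<zeta>
  proof -
    have "cmod (c * \<zeta>) \<le> cmod c" using that by (simp add: norm_mult mult_right_le_one_le)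
    then have "cmod (c * \<zeta>) < 1" using c by simp
    then have "Re (c * \<zeta>) < 1" using complex_Re_le_cmod le_less_trans by blast
    then show ?thesis by simp
  qed
  have np: "1 - c * \<zeta> \<notin> \<real>\<^sub>\<le>\<^sub>0" if "\<zeta> \<in> cball 0 1" for \<zeta>
    using pos[OF that] by (auto simp: complex_nonpos_Reals_iff)
  have cont: "continuous_on (cball 0 1) g" unfolding g_def
    by (intro continuous_intros) (use np in auto)
  have hol: "g holomorphic_on ball 0 1" unfolding g_def
    by (intro holomorphic_intros) (use np in auto)
  have "((\<lambda>t. g (cis t)) has_integral (2 * pi * g 0)) {0..2*pi}" by (rule mean_value_holo[OF cont hol])
  then have "((Re \<circ> (\<lambda>t. g (cis t))) has_integral Re (2 * pi * g 0)) {0..2*pi}"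
    by (rule has_integral_linear) (rule bounded_linear_Re)
  moreover have "Re (g (cis t)) = ln (cmod (1 - c * cis t))" for t
  proof -
    have "1 - c * cis t \<noteq> 0"
    proof
      assume "1 - c * cis t = 0"
      then have "Re (1 - c * cis t) = 0" by simp
      with pos[of "cis t"] show False by simp
    qed
    then show ?thesis unfolding g_def by simp
  qed
  ultimately show ?thesis by (simp add: g_def o_def)
qed

lemma factor_mean:
  fixes r :: complex and s :: real
  assumes s: "s > 0" and r: "r \<noteq> 0" and rs: "cmod r \<noteq> s"
  shows "\<exists>I. ((\<lambda>t. ln (cmod (of_real s * cis t - r))) has_integral I) {0..2*pi} \<and> I \<ge> 2 * pi * ln (cmod r)"
proof (cases "cmod r > s")
  case True
  define c where "c = of_real s / r"
  have c: "cmod c < 1" unfolding c_def using True s r by (simp add: norm_divide divide_less_eq)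
  have nz: "1 - c * cis t \<noteq> 0" for t
  proof
    assume "1 - c * cis t = 0"
    then have "cmod (c * cis t) = 1" by (metis eq_iff_diff_eq_0 norm_one)
    with c show False by (simp add: norm_mult)
  qed
  have eq: "ln (cmod (of_real s * cis t - r)) = ln (cmod r) + ln (cmod (1 - c * cis t))" for t
  proof -
    have "of_real s * cis t - r = (- r) * (1 - c * cis t)" unfolding c_def using r by (simp add: field_simps)
    then have "cmod (of_real s * cis t - r) = cmod r * cmod (1 - c * cis t)" by (simp add: norm_mult)
    then show ?thesis using r nz[of t] by (simp add: ln_mult)
  qed
  have "((\<lambda>t. ln (cmod r) + ln (cmod (1 - c * cis t))) has_integral (2 * pi * ln (cmod r) + 0)) {0..2*pi}"
    by (intro has_integral_add log_mean_zero[OF c]) (use has_integral_const_real[of "ln (cmod r)" 0 "2*pi"] in \<open>simp add: mult.commute\<close>)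
  then show ?thesis unfolding eq by auto
next
  case False
  then have lt: "cmod r < s" using rs by simp
  define c where "c = cnj r / of_real s"
  have c: "cmod c < 1" unfolding c_def using lt s by (simp add: norm_divide divide_less_eq)
  have nz: "1 - c * cis t \<noteq> 0" for t
  proof
    assume "1 - c * cis t = 0"
    then have "cmod (c * cis t) = 1" by (metis eq_iff_diff_eq_0 norm_one)
    with c show False by (simp add: norm_mult)
  qed
  have eq: "ln (cmod (of_real s * cis t - r)) = ln s + ln (cmod (1 - c * cis t))" for t
  proof -
    have cc: "cis t * cnj (cis t) = 1" by (simp add: cis_cnj cis_mult)
    have "cnj (of_real s * cis t - r) = cis (- t) * (of_real s * (1 - c * cis t))"
      unfolding c_def using s cc by (simp add: field_simps cis_mult flip: cis_cnj)
    then have "cmod (of_real s * cis t - r) = s * cmod (1 - c * cis t)"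
      using s by (metis abs_of_pos complex_mod_cnj norm_cis norm_mult norm_of_real mult_1)
    then show ?thesis using s nz[of t] by (simp add: ln_mult)
  qed
  have "((\<lambda>t. ln s + ln (cmod (1 - c * cis t))) has_integral (2 * pi * ln s + 0)) {0..2*pi}"
    by (intro has_integral_add log_mean_zero[OF c]) (use has_integral_const_real[of "ln s" 0 "2*pi"] in \<open>simp add: mult.commute\<close>)
  moreover have "ln (cmod r) \<le> ln s" using lt r s by (intro ln_le_cancel_iff[THEN iffD2]) auto
  then have "2 * pi * ln (cmod r) \<le> 2 * pi * ln s" by simp
  ultimately show ?thesis unfolding eq by auto
qed

lemma poly_log_formula:
  fixes p :: "complex poly"
  assumes p0: "poly p 0 \<noteq> 0" and z: "poly p \<zeta> \<noteq> 0"
  shows "ln (cmod (poly p \<zeta>)) = ln (cmod (lead_coeff p)) +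
           (\<Sum>r\<in>{z. poly p z = 0}. real (order r p) * ln (cmod (\<zeta> - r)))"
proof -
  define R where "R = {z. poly p z = 0}"
  have pne: "p \<noteq> 0" using p0 by auto
  have fin: "finite R" unfolding R_def by (rule poly_roots_finite[OF pne])
  have lc: "lead_coeff p \<noteq> 0" using pne by simp
  have dec: "poly p \<zeta> = lead_coeff p * (\<Prod>r\<in>R. (\<zeta> - r) ^ order r p)"
    by (subst complex_poly_decompose[symmetric]) (simp add: R_def poly_prod)
  have nz: "\<zeta> - r \<noteq> 0" if "r \<in> R" for r using that z unfolding R_def by auto
  have "cmod (poly p \<zeta>) = cmod (lead_coeff p) * (\<Prod>r\<in>R. cmod (\<zeta> - r) ^ order r p)"
    unfolding dec by (simp add: norm_mult norm_power flip: prod_norm)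
  then have "ln (cmod (poly p \<zeta>)) = ln (cmod (lead_coeff p)) + ln (\<Prod>r\<in>R. cmod (\<zeta> - r) ^ order r p)"
  proof -
    assume e: "cmod (poly p \<zeta>) = cmod (lead_coeff p) * (\<Prod>r\<in>R. cmod (\<zeta> - r) ^ order r p)"
    have "0 < (\<Prod>r\<in>R. cmod (\<zeta> - r) ^ order r p)" by (rule prod_pos) (use nz in auto)
    then show ?thesis using lc e by (simp add: ln_mult)
  qed
  also have "ln (\<Prod>r\<in>R. cmod (\<zeta> - r) ^ order r p) = (\<Sum>r\<in>R. real (order r p) * ln (cmod (\<zeta> - r)))"
    using fin nz by (simp add: ln_prod ln_realpow)
  finally show ?thesis unfolding R_def .
qed

lemma poly_log_mean:
  fixes p :: "complex poly" and s :: real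
  assumes p0: "poly p 0 \<noteq> 0" and s: "s > 0" and noroot: "\<And>z. poly p z = 0 \<Longrightarrow> cmod z \<noteq> s"
  shows "\<exists>I. ((\<lambda>t. ln (cmod (poly p (of_real s * cis t)))) has_integral I) {0..2*pi} \<and>
             I \<ge> 2 * pi * ln (cmod (poly p 0))"
proof -
  define R where "R = {z. poly p z = 0}"
  have pne: "p \<noteq> 0" using p0 by auto
  have fin: "finite R" unfolding R_def by (rule poly_roots_finite[OF pne])
  have "\<forall>r\<in>R. \<exists>I. ((\<lambda>t. ln (cmod (of_real s * cis t - r))) has_integral I) {0..2*pi} \<and> I \<ge> 2 * pi * ln (cmod r)"
  proof
    fix r assume r: "r \<in> R"
    have "r \<noteq> 0" using r p0 unfolding R_def by auto
    moreover have "cmod r \<noteq> s" using r noroot unfolding R_def by auto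
    ultimately show "\<exists>I. ((\<lambda>t. ln (cmod (of_real s * cis t - r))) has_integral I) {0..2*pi} \<and> I \<ge> 2 * pi * ln (cmod r)"
      using factor_mean[OF s] by blast
  qed
  then obtain I where I: "\<And>r. r \<in> R \<Longrightarrow> ((\<lambda>t. ln (cmod (of_real s * cis t - r))) has_integral I r) {0..2*pi}"
      "\<And>r. r \<in> R \<Longrightarrow> I r \<ge> 2 * pi * ln (cmod r)"
    by metis
  define L where "L = ln (cmod (lead_coeff p))"
  have int: "((\<lambda>t. L + (\<Sum>r\<in>R. real (order r p) * ln (cmod (of_real s * cis t - r)))) has_integral
      (2 * pi * L + (\<Sum>r\<in>R. real (order r p) * I r))) {0..2*pi}"
  proof (rule has_integral_add)
    show "((\<lambda>t. L) has_integral 2 * pi * L) {0..2*pi}"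
      using has_integral_const_real[of L 0 "2*pi"] by (simp add: mult.commute)
    show "((\<lambda>t. \<Sum>r\<in>R. real (order r p) * ln (cmod (of_real s * cis t - r))) has_integral
      (\<Sum>r\<in>R. real (order r p) * I r)) {0..2*pi}"
      by (rule has_integral_sum[OF fin]) (rule has_integral_mult_right[OF I(1)])
  qed
  have eqf: "ln (cmod (poly p (of_real s * cis t))) = L + (\<Sum>r\<in>R. real (order r p) * ln (cmod (of_real s * cis t - r)))" for t
  proof -
    have "poly p (of_real s * cis t) \<noteq> 0"
    proof
      assume "poly p (of_real s * cis t) = 0"
      from noroot[OF this] s show False by (simp add: norm_mult)
    qed
    then show ?thesis unfolding L_def R_def by (rule poly_log_formula[OF p0])
  qed
  have eq0: "ln (cmod (poly p 0)) = L + (\<Sum>r\<in>R. real (order r p) * ln (cmod (0 - r)))"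
    unfolding L_def R_def by (rule poly_log_formula[OF p0 p0])
  have "2 * pi * ln (cmod (poly p 0)) = 2 * pi * L + (\<Sum>r\<in>R. real (order r p) * (2 * pi * ln (cmod r)))"
    unfolding eq0 by (simp add: algebra_simps sum_distrib_left)
  also have "\<dots> \<le> 2 * pi * L + (\<Sum>r\<in>R. real (order r p) * I r)"
    by (intro add_left_mono sum_mono mult_left_mono I(2)) auto
  finally show ?thesis using int unfolding eqf[abs_def] by blast
qed

lemma ln_max_lip:
  fixes B x y :: real assumes B: "B > 0"
  shows "\<bar>ln (max B x) - ln (max B y)\<bar> \<le> \<bar>x - y\<bar> / B"
proof -
  have one: "ln (max B u) - ln (max B v) \<le> \<bar>u - v\<bar> / B" for u v
  proof -
    define X where "X = max B u"
    define Y where "Y = max B v"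
    have XY: "X \<ge> B" "Y \<ge> B" unfolding X_def Y_def by auto
    have d: "\<bar>X - Y\<bar> \<le> \<bar>u - v\<bar>" unfolding X_def Y_def max_def by (auto split: if_splits)
    have "ln X - ln Y = ln (X / Y)" using XY B by (simp add: ln_div)
    also have "\<dots> \<le> X / Y - 1" by (rule ln_le_minus_one) (use XY B in simp)
    also have "\<dots> = (X - Y) / Y" using XY B by (simp add: field_simps)
    also have "\<dots> \<le> \<bar>X - Y\<bar> / Y" using XY B by (intro divide_right_mono) auto
    also have "\<dots> \<le> \<bar>X - Y\<bar> / B" using XY B by (intro divide_left_mono) auto
    also have "\<dots> \<le> \<bar>u - v\<bar> / B" using d B by (intro divide_right_mono) auto
    finally show ?thesis unfolding X_def Y_def .
  qed
  show ?thesis using one[of x y] one[of y x] by (simp add: abs_le_iff abs_minus_commute)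
qed

lemma poly_log_max_mean:
  fixes p :: "complex poly" and B :: real
  assumes p0: "poly p 0 \<noteq> 0" and B: "B > 0"
  shows "2 * pi * ln (cmod (poly p 0)) \<le> integral {0..2*pi} (\<lambda>t. ln (max B (cmod (poly p (cis t)))))"
proof (rule field_le_epsilon)
  fix \<epsilon> :: real assume \<epsilon>: "\<epsilon> > 0"
  define h where "h = (\<lambda>(l::real) t. ln (max B (cmod (poly p (of_real l * cis t)))))"
  have hint: "(h l) integrable_on {0..2*pi}" for l
  proof -
    have "continuous_on {0..2*pi} (h l)" unfolding h_def
      by (intro continuous_intros continuous_on_ln) (use B in auto)
    then show ?thesis by (rule integrable_continuous_interval)
  qed
  define e where "e = \<epsilon> / (2 * pi)"
  have e: "e > 0" unfolding e_def using \<epsilon> by simp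
  have "uniformly_continuous_on (cball 0 1) (poly p)"
    by (rule compact_uniformly_continuous) (auto intro: continuous_intros)
  then have uc: "\<forall>e>0. \<exists>d>0. \<forall>x\<in>cball 0 1. \<forall>x'\<in>cball 0 1. dist x' x < d \<longrightarrow> dist (poly p x') (poly p x) < e"
    unfolding uniformly_continuous_on_def .
  have eB: "e * B > 0" using e B by simp
  obtain \<delta> where \<delta>: "\<delta> > 0" "\<And>x y. x \<in> cball 0 1 \<Longrightarrow> y \<in> cball 0 1 \<Longrightarrow> dist y x < \<delta> \<Longrightarrow> dist (poly p y) (poly p x) < e * B"
    using uc[rule_format, OF eB] by blast
  define R where "R = {z. poly p z = 0}"
  have pne: "p \<noteq> 0" using p0 by auto
  have fin: "finite (cmod ` R)" unfolding R_def using poly_roots_finite[OF pne] by simp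
  define lo where "lo = max (1/2) (1 - \<delta> / 2)"
  have lo: "lo < 1" "lo > 0" unfolding lo_def using \<delta> by auto
  have "infinite ({lo<..<1} - cmod ` R)" using lo fin by (simp add: infinite_Ioo)
  then have "{lo<..<1} - cmod ` R \<noteq> {}" by (metis finite.emptyI)
  then obtain l where l: "l \<in> {lo<..<1}" "l \<notin> cmod ` R" by blast
  have l0: "l > 0" "l < 1" "1 - l < \<delta>" using l lo unfolding lo_def by auto
  have close: "h 1 t \<ge> h l t - e" for t
  proof -
    have "cis t \<in> cball 0 1" "of_real l * cis t \<in> cball 0 1" using l0 by (auto simp: norm_mult)
    moreover have "dist (of_real l * cis t) (cis t) < \<delta>"
    proof -
      have "dist (of_real l * cis t) (cis t) = cmod ((of_real l - 1) * cis t)" by (simp add: dist_norm algebra_simps)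
      also have "\<dots> = cmod (of_real (l - 1))" by (simp add: norm_mult)
      also have "\<dots> = 1 - l" using l0 norm_of_real[of "l - 1"] by simp
      finally show ?thesis using l0 by simp
    qed
    ultimately have "dist (poly p (of_real l * cis t)) (poly p (cis t)) < e * B" using \<delta>(2) by blast
    then have "\<bar>cmod (poly p (of_real l * cis t)) - cmod (poly p (cis t))\<bar> < e * B"
      unfolding dist_norm using norm_triangle_ineq3 le_less_trans by blast
    then have "\<bar>h l t - h 1 t\<bar> \<le> e * B / B"
    proof -
      have "\<bar>h l t - h 1 t\<bar> \<le> \<bar>cmod (poly p (of_real l * cis t)) - cmod (poly p (cis t))\<bar> / B"
        unfolding h_def using ln_max_lip[OF B] by simp
      also have "\<dots> \<le> e * B / B" using B calculation by (intro divide_right_mono) (use \<open>\<bar>cmod (poly p (of_real l * cis t)) - cmod (poly p (cis t))\<bar> < e * B\<close> in auto)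
      finally show ?thesis .
    qed
    then show ?thesis using B by simp
  qed
  obtain I where I: "((\<lambda>t. ln (cmod (poly p (of_real l * cis t)))) has_integral I) {0..2*pi}" "I \<ge> 2 * pi * ln (cmod (poly p 0))"
  proof -
    have "poly p z = 0 \<Longrightarrow> cmod z \<noteq> l" for z using l(2) unfolding R_def by auto
    then show ?thesis using poly_log_mean[OF p0 l0(1)] that by blast
  qed
  have "I \<le> integral {0..2*pi} (h l)"
  proof -
    have "I = integral {0..2*pi} (\<lambda>t. ln (cmod (poly p (of_real l * cis t))))" using I(1) by (simp add: integral_unique)
    also have "\<dots> \<le> integral {0..2*pi} (h l)"
    proof (rule integral_le[OF has_integral_integrable[OF I(1)] hint])
      fix t
      have "poly p (of_real l * cis t) \<noteq> 0"
      proof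
        assume "poly p (of_real l * cis t) = 0"
        then have "cmod (of_real l * cis t) \<in> cmod ` R" unfolding R_def by auto
        with l(2) l0 show False by (simp add: norm_mult)
      qed
      then show "ln (cmod (poly p (of_real l * cis t))) \<le> h l t" unfolding h_def using B by (subst ln_le_cancel_iff) auto
    qed
    finally show ?thesis .
  qed
  also have "integral {0..2*pi} (h l) - 2 * pi * e \<le> integral {0..2*pi} (h 1)"
  proof -
    have "integral {0..2*pi} (\<lambda>t. h l t - e) \<le> integral {0..2*pi} (h 1)"
      by (rule integral_le) (use hint close in \<open>auto intro: integrable_diff\<close>)
    moreover have "integral {0..2*pi} (\<lambda>t. h l t - e) = integral {0..2*pi} (h l) - 2 * pi * e"
      by (subst integral_diff) (auto intro: hint)
    ultimately show ?thesis by simp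
  qed
  ultimately have "2 * pi * ln (cmod (poly p 0)) \<le> integral {0..2*pi} (h 1) + 2 * pi * e" using I(2) by linarith
  moreover have "2 * pi * e = \<epsilon>" unfolding e_def by simp
  moreover have "h 1 = (\<lambda>t. ln (max B (cmod (poly p (cis t)))))" unfolding h_def by simp
  ultimately show "2 * pi * ln (cmod (poly p 0)) \<le> integral {0..2*pi} (\<lambda>t. ln (max B (cmod (poly p (cis t))))) + \<epsilon>" by simp
qed



lemma Fmap_poly:
  assumes "\<And>i. \<exists>p. \<forall>\<zeta>. X \<zeta> $ i = poly p \<zeta>"
  shows "\<exists>p. \<forall>\<zeta>. Fmap e d (X \<zeta> :: complex^('k::{finite,linorder})) $ i = poly p \<zeta>"
proof (cases "i = first_idx")
  case True
  obtain p where p: "\<forall>\<zeta>. X \<zeta> $ last_idx = poly p \<zeta>" using assms by blast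
  show ?thesis using True p by (intro exI[of _ "smult e p"]) (simp add: Fmap_first)
next
  case False
  obtain p where p: "\<forall>\<zeta>. X \<zeta> $ i = poly p \<zeta>" using assms by blast
  obtain q where q: "\<forall>\<zeta>. X \<zeta> $ pred_idx i = poly q \<zeta>" using assms by blast
  show ?thesis using False p q by (intro exI[of _ "p ^ d + smult e q"]) (simp add: Fmap_other poly_power)
qed

lemma Fiter_poly:
  "\<exists>p. \<forall>\<zeta>. Fiter eta d n (z + \<zeta> *s w :: complex^('k::{finite,linorder})) $ i = poly p \<zeta>"
proof (induction n arbitrary: i)
  case 0
  have "\<exists>p. \<forall>\<zeta>. (z + \<zeta> *s w) $ j = poly p \<zeta>" for j
    by (intro exI[of _ "[:z $ j, w $ j:]"]) (simp add: algebra_simps)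
  then show ?case by (simp add: Fmap_poly)
next
  case (Suc n)
  then show ?case by (simp add: Fmap_poly)
qed

context dyn begin

definition AA :: "nat \<Rightarrow> real" where "AA n = a ^ (d ^ n)"

lemma AA_pos: "AA n > 0" unfolding AA_def using a0 by simp
lemma AA_le1: "AA n \<le> 1" unfolding AA_def using a0 a1 by (simp add: power_le_one)
lemma AA_Suc: "AA (Suc n) = AA n ^ d" unfolding AA_def by (simp only: power_Suc2 power_mult)
lemma dpos: "real d ^ n > 0" using d2 by simp

definition psi :: "nat \<Rightarrow> complex^('k::{finite,linorder}) \<Rightarrow> real" where
  "psi n z = ln (max (AA n) (Mx (Fiter eta d n z))) / real d ^ n"

definition phin :: "nat \<Rightarrow> complex^('k::{finite,linorder}) \<Rightarrow> real" where
  "phin n z = psi n z + ln 2 / ((real d - 1) * real d ^ n)"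

definition phi :: "complex^('k::{finite,linorder}) \<Rightarrow> real" where
  "phi z = (INF n. phin n z)"

lemma psi_lower: "psi n z \<ge> ln a"
proof -
  have "ln (AA n) \<le> ln (max (AA n) (Mx (Fiter eta d n z)))" using AA_pos[of n] by (subst ln_le_cancel_iff) auto
  moreover have "ln (AA n) = real d ^ n * ln a" unfolding AA_def using a0 by (simp add: ln_realpow)
  ultimately show ?thesis unfolding psi_def using dpos[of n] by (simp add: field_simps)
qed

lemma tail_pos: "ln 2 / ((real d - 1) * real d ^ n) > 0"
  using d2 dpos[of n] by (intro divide_pos_pos) auto

lemma phin_lower: "phin n z \<ge> ln a"
  using psi_lower[of n z] tail_pos[of n] unfolding phin_def by simp

lemma phin_dec: "phin (Suc n) z \<le> phin n (z::complex^('k::{finite,linorder}))"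
proof -
  define M where "M = Mx (Fiter eta d n z)"
  define X where "X = max (AA n) M"
  have M0: "M \<ge> 0" unfolding M_def by (rule Mx_nonneg)
  have X0: "X > 0" unfolding X_def using AA_pos[of n] by simp
  have MX: "M \<le> X" "AA n \<le> X" unfolding X_def by auto
  have Xd: "M ^ d \<le> X ^ d" "AA n ^ d \<le> X ^ d" using MX M0 AA_pos[of n] by (auto intro: power_mono)
  have e: "cmod (eta (Suc n)) \<le> AA n ^ d" using etab[of "Suc n"] AA_Suc[of n] unfolding AA_def by simp
  have e1: "cmod (eta (Suc n)) \<le> 1" using e AA_le1[of "Suc n"] AA_Suc[of n] by simp
  have eM: "cmod (eta (Suc n)) * M \<le> X ^ d"
  proof (cases "M \<le> 1")
    case True
    then have "cmod (eta (Suc n)) * M \<le> AA n ^ d * 1" using e M0 AA_pos[of n] by (intro mult_mono) auto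
    then show ?thesis using Xd by simp
  next
    case False
    then have "cmod (eta (Suc n)) * M \<le> 1 * M" using e1 M0 by (intro mult_right_mono) auto
    also have "M \<le> M ^ d" using power_increasing[of 1 d M] False d2 by simp
    finally show ?thesis using Xd by simp
  qed
  have M1: "Mx (Fiter eta d (Suc n) z) \<le> 2 * X ^ d"
  proof -
    have "Mx (Fiter eta d (Suc n) z) \<le> M ^ d + cmod (eta (Suc n)) * M" unfolding M_def by (simp add: Mx_Fmap)
    then show ?thesis using Xd eM by simp
  qed
  have "max (AA (Suc n)) (Mx (Fiter eta d (Suc n) z)) \<le> 2 * X ^ d"
  proof -
    have "0 < X ^ d" using X0 by simp
    then show ?thesis using M1 Xd AA_Suc[of n] by (simp add: max_def)
  qed
  then have "ln (max (AA (Suc n)) (Mx (Fiter eta d (Suc n) z))) \<le> ln (2 * X ^ d)"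
    using AA_pos[of "Suc n"] by (subst ln_le_cancel_iff) auto
  also have "\<dots> = ln 2 + real d * ln X" using X0 by (simp add: ln_mult ln_realpow)
  finally have L: "ln (max (AA (Suc n)) (Mx (Fiter eta d (Suc n) z))) \<le> ln 2 + real d * ln X" .
  have dd: "real d ^ Suc n = real d * real d ^ n" by simp
  have "psi (Suc n) z \<le> ln 2 / real d ^ Suc n + psi n z"
  proof -
    have "psi (Suc n) z \<le> (ln 2 + real d * ln X) / real d ^ Suc n"
      unfolding psi_def using L dpos[of "Suc n"] by (intro divide_right_mono) auto
    also have "\<dots> = ln 2 / real d ^ Suc n + psi n z"
      unfolding psi_def X_def M_def dd using d2 dpos[of n] by (simp add: field_simps)
    finally show ?thesis .
  qed
  moreover have "ln 2 / real d ^ Suc n + ln 2 / ((real d - 1) * real d ^ Suc n) = ln 2 / ((real d - 1) * real d ^ n)"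
    unfolding dd using d2 dpos[of n] by (simp add: field_simps)
  ultimately show ?thesis unfolding phin_def by linarith
qed

lemma phin_decseq: "decseq (\<lambda>n. phin n z)"
  by (rule decseq_SucI) (rule phin_dec)

lemma phin_bdd: "bdd_below (range (\<lambda>n. phin n z))"
  by (rule bdd_belowI[of _ "ln a"]) (auto intro: phin_lower)

lemma phin_lim: "(\<lambda>n. phin n z) \<longlonglongrightarrow> phi z"
  unfolding phi_def by (rule LIMSEQ_decseq_INF[OF phin_bdd phin_decseq])

lemma phi_le: "phi z \<le> phin n z"
  unfolding phi_def by (rule cINF_lower[OF phin_bdd]) simp

lemma phi_lower: "phi z \<ge> ln a"
  unfolding phi_def by (rule cINF_greatest) (auto intro: phin_lower)

lemma cont_phin: "continuous_on S (phin n)"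
proof -
  have "continuous_on S (\<lambda>z. ln (max (AA n) (Mx (Fiter eta d n z))) / real d ^ n + ln 2 / ((real d - 1) * real d ^ n))"
    by (intro continuous_intros continuous_on_ln continuous_on_compose2[OF continuous_Mx cont_G]) (use AA_pos[of n] d2 in auto)
  then show ?thesis unfolding phin_def[abs_def] psi_def by simp
qed

end


lemma cont_circle: "continuous_on S (\<lambda>t::real. z + cis t *s (w::complex^'n))"
proof -
  have "continuous_on UNIV (\<lambda>h::complex. z + h *s w)"
    using line_deriv[of z w] has_derivative_continuous continuous_at_imp_continuous_on by blast
  then show ?thesis by (rule continuous_on_compose2[OF _ continuous_on_cis]) auto
qed

lemma cis_exp_eq: "exp (\<i> * complex_of_real t) = cis t"
  by (simp add: cis_conv_exp)

context dyn begin

lemma cont_line_Mx: "continuous_on S (\<lambda>t. Mx (Fiter eta d n (z + cis t *s (w::complex^('k::{finite,linorder})))))"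
proof -
  have "continuous_on S (\<lambda>t. Fiter eta d n (z + cis t *s w))"
    by (rule continuous_on_compose2[OF cont_G cont_circle]) auto
  then show ?thesis by (rule continuous_on_compose2[OF continuous_Mx]) auto
qed

lemma lnmax_submean:
  fixes z w :: "complex^('k::{finite,linorder})"
  shows "2 * pi * ln (max (AA n) (Mx (Fiter eta d n z))) \<le>
         integral {0..2*pi} (\<lambda>t. ln (max (AA n) (Mx (Fiter eta d n (z + cis t *s w)))))"
proof -
  define L where "L = (\<lambda>t. ln (max (AA n) (Mx (Fiter eta d n (z + cis t *s w)))))"
  have contL: "continuous_on {0..2*pi} L" unfolding L_def
    by (intro continuous_intros continuous_on_ln cont_line_Mx) (use AA_pos[of n] in auto)
  have intL: "L integrable_on {0..2*pi}" by (rule integrable_continuous_interval[OF contL])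
  have lowL: "L t \<ge> ln (AA n)" for t unfolding L_def using AA_pos[of n] by (subst ln_le_cancel_iff) auto
  obtain i where i: "Mx (Fiter eta d n z) = cmod (Fiter eta d n z $ i)" using Mx_attained by blast
  show ?thesis
  proof (cases "Mx (Fiter eta d n z) \<le> AA n")
    case True
    have "2 * pi * ln (max (AA n) (Mx (Fiter eta d n z))) = integral {0..2*pi} (\<lambda>t. ln (AA n))"
      using True integral_unique[OF has_integral_const_real[of "ln (AA n)" 0 "2*pi"]] by (simp add: max_def)
    also have "\<dots> \<le> integral {0..2*pi} L" by (rule integral_le) (use intL lowL in auto)
    finally show ?thesis unfolding L_def .
  next
    case False
    obtain p where p: "\<forall>\<zeta>. Fiter eta d n (z + \<zeta> *s w) $ i = poly p \<zeta>" using Fiter_poly by blast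
    have p0: "poly p 0 = Fiter eta d n z $ i" using p[rule_format, of 0] by simp
    have p0n: "poly p 0 \<noteq> 0" using False i AA_pos[of n] p0 by auto
    have "2 * pi * ln (max (AA n) (Mx (Fiter eta d n z))) = 2 * pi * ln (cmod (poly p 0))"
      using False i p0 by simp
    also have "\<dots> \<le> integral {0..2*pi} (\<lambda>t. ln (max (AA n) (cmod (poly p (cis t)))))"
      by (rule poly_log_max_mean[OF p0n AA_pos])
    also have "\<dots> \<le> integral {0..2*pi} L"
    proof (rule integral_le)
      show "(\<lambda>t. ln (max (AA n) (cmod (poly p (cis t))))) integrable_on {0..2*pi}"
        by (intro integrable_continuous_interval continuous_intros continuous_on_ln) (use AA_pos[of n] in auto)
      show "L integrable_on {0..2*pi}" by (rule intL)
      fix t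
      have "cmod (poly p (cis t)) \<le> Mx (Fiter eta d n (z + cis t *s w))" using p Mx_ge by metis
      then show "ln (max (AA n) (cmod (poly p (cis t)))) \<le> L t"
        unfolding L_def using AA_pos[of n] by (subst ln_le_cancel_iff) auto
    qed
    finally show ?thesis unfolding L_def .
  qed
qed

lemma phin_submean:
  fixes z w :: "complex^('k::{finite,linorder})"
  shows "(\<lambda>t. phin n (z + exp (\<i> * of_real t) *s w)) integrable_on {0..2*pi} \<and>
         phin n z \<le> (1 / (2*pi)) * integral {0..2*pi} (\<lambda>t. phin n (z + exp (\<i> * of_real t) *s w))"
proof -
  define L where "L = (\<lambda>t. ln (max (AA n) (Mx (Fiter eta d n (z + cis t *s w)))))"
  define c where "c = ln 2 / ((real d - 1) * real d ^ n)"
  define D where "D = real d ^ n"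
  have D: "D > 0" unfolding D_def by (rule dpos)
  have contL: "continuous_on {0..2*pi} L" unfolding L_def
    by (intro continuous_intros continuous_on_ln cont_line_Mx) (use AA_pos[of n] in auto)
  have intL: "(L has_integral integral {0..2*pi} L) {0..2*pi}"
    by (rule integrable_integral[OF integrable_continuous_interval[OF contL]])
  have eq: "(\<lambda>t. phin n (z + exp (\<i> * of_real t) *s w)) = (\<lambda>t. L t / D + c)"
    unfolding L_def c_def D_def phin_def psi_def by (simp add: cis_exp_eq)
  have hi: "((\<lambda>t. L t / D + c) has_integral (integral {0..2*pi} L / D + 2 * pi * c)) {0..2*pi}"
    by (intro has_integral_add has_integral_divide intL)
       (use has_integral_const_real[of c 0 "2*pi"] in \<open>simp add: mult.commute\<close>)
  have sm: "2 * pi * ln (max (AA n) (Mx (Fiter eta d n z))) \<le> integral {0..2*pi} L"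
    unfolding L_def by (rule lnmax_submean)
  have "phin n z = ln (max (AA n) (Mx (Fiter eta d n z))) / D + c"
    unfolding phin_def psi_def c_def D_def ..
  also have "\<dots> \<le> (1 / (2*pi)) * (integral {0..2*pi} L / D + 2 * pi * c)"
    using sm D pi_gt_zero by (simp add: field_simps)
  finally have le: "phin n z \<le> (1 / (2*pi)) * (integral {0..2*pi} L / D + 2 * pi * c)" .
  show ?thesis unfolding eq using le integral_unique[OF hi] has_integral_integrable[OF hi] by simp
qed

lemma phi_psh: "psh (phi :: complex^('k::{finite,linorder}) \<Rightarrow> real)"
  unfolding psh_def
proof (intro conjI allI)
  show "usc (phi :: complex^('k::{finite,linorder}) \<Rightarrow> real)" unfolding usc_def
  proof (intro allI impI)
    fix x :: "complex^('k::{finite,linorder})" and t :: real assume xt: "phi x < t"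
    obtain n where n: "phin n x < t"
      using order_tendstoD(2)[OF phin_lim xt] unfolding eventually_sequentially by blast
    have "continuous_on UNIV (phin n :: complex^('k::{finite,linorder}) \<Rightarrow> real)" by (rule cont_phin)
    then have "isCont (phin n) x" by (simp add: continuous_on_eq_continuous_at)
    then have "((phin n) \<longlongrightarrow> phin n x) (at x)" unfolding isCont_def .
    then have "eventually (\<lambda>y. phin n y < t) (at x)" using order_tendstoD(2) n by blast
    then show "eventually (\<lambda>y. phi y < t) (at x)"
      by (rule eventually_mono) (use phi_le le_less_trans in blast)
  qed
next
  fix z w :: "complex^('k::{finite,linorder})"
  define f where "f = (\<lambda>k t. phin k (z + exp (\<i> * of_real t) *s w))"
  define g where "g = (\<lambda>t. phi (z + exp (\<i> * of_real t) *s w))"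
  have intf: "\<And>k. f k integrable_on {0..2*pi}" unfolding f_def using phin_submean by blast
  have lowf: "integral {0..2*pi} (f k) \<ge> 2 * pi * ln a" for k
  proof -
    have "integral {0..2*pi} (\<lambda>t. ln a) \<le> integral {0..2*pi} (f k)"
      by (rule integral_le) (use intf phin_lower in \<open>auto simp: f_def\<close>)
    then show ?thesis using integral_unique[OF has_integral_const_real[of "ln a" 0 "2*pi"]] by simp
  qed
  have upf: "integral {0..2*pi} (f k) \<le> integral {0..2*pi} (f 0)" for k
    by (rule integral_le[OF intf intf]) (use decseqD[OF phin_decseq] in \<open>auto simp: f_def\<close>)
  have bnd: "bounded (range (\<lambda>k. integral {0..2*pi} (f k)))"
    unfolding bounded_real
  proof (rule exI[of _ "\<bar>2 * pi * ln a\<bar> + \<bar>integral {0..2*pi} (f 0)\<bar>"], safe)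
    fix k
    show "\<bar>integral {0..2*pi} (f k)\<bar> \<le> \<bar>2 * pi * ln a\<bar> + \<bar>integral {0..2*pi} (f 0)\<bar>"
      using lowf[of k] upf[of k] by linarith
  qed
  have mc: "g integrable_on {0..2*pi} \<and> (\<lambda>k. integral {0..2*pi} (f k)) \<longlonglongrightarrow> integral {0..2*pi} g"
  proof (rule monotone_convergence_decreasing[OF intf _ _ bnd])
    show "\<And>k x. x \<in> {0..2*pi} \<Longrightarrow> f (Suc k) x \<le> f k x" unfolding f_def by (rule phin_dec)
    show "\<And>x. x \<in> {0..2*pi} \<Longrightarrow> (\<lambda>k. f k x) \<longlonglongrightarrow> g x" unfolding f_def g_def by (rule phin_lim)
  qed
  then show "(\<lambda>t. phi (z + exp (\<i> * of_real t) *s w)) integrable_on {0..2*pi}" unfolding g_def by blast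
  have "(\<lambda>k. (1 / (2*pi)) * integral {0..2*pi} (f k)) \<longlonglongrightarrow> (1 / (2*pi)) * integral {0..2*pi} g"
    using mc by (intro tendsto_mult_left) blast
  moreover have "phi z \<le> (1 / (2*pi)) * integral {0..2*pi} (f k)" for k
    using phi_le[of z k] phin_submean[of k z w] unfolding f_def by linarith
  ultimately have "phi z \<le> (1 / (2*pi)) * integral {0..2*pi} g"
    by (intro LIMSEQ_le_const) auto
  then show "phi z \<le> 1 / (2 * pi) * integral {0..2 * pi} (\<lambda>t. phi (z + exp (\<i> * complex_of_real t) *s w))"
    unfolding g_def by simp
qed

end


context dyn begin

lemma basin_phi: "(basin eta d :: (complex^('k::{finite,linorder})) set) = {z. phi z < 0}"
proof (intro set_eqI iffI)
  fix z :: "complex^('k::{finite,linorder})"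
  assume z: "z \<in> basin eta d"
  have Gz: "(\<lambda>n. Fiter eta d n z) \<longlonglongrightarrow> 0" using z unfolding basin_def by simp
  have MG: "(\<lambda>n. Mx (Fiter eta d n z)) \<longlonglongrightarrow> 0"
    by (rule Lim_null_comparison[OF _ tendsto_norm_zero[OF Gz]]) (auto intro!: always_eventually simp: Mx_nonneg Mx_le_norm)
  have AAl: "AA \<longlonglongrightarrow> 0"
  proof (rule Lim_null_comparison[OF _ LIMSEQ_realpow_zero[of a]])
    show "\<forall>\<^sub>F n in sequentially. norm (AA n) \<le> a ^ n"
    proof (intro always_eventually allI)
      fix n
      have "n \<le> d ^ n"
      proof -
        have "n < 2 ^ n" by (rule less_exp)
        also have "(2::nat) ^ n \<le> d ^ n" using d2 by (rule power_mono) simp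
        finally show ?thesis by simp
      qed
      then have "a ^ (d ^ n) \<le> a ^ n" using a0 a1 by (intro power_decreasing) auto
      then show "norm (AA n) \<le> a ^ n" using AA_pos[of n] unfolding AA_def by simp
    qed
  qed (use a0 a1 in auto)
  have e1: "eventually (\<lambda>n. Mx (Fiter eta d n z) < 1/4) sequentially"
    using order_tendstoD(2)[OF MG, of "1/4"] by simp
  have e2: "eventually (\<lambda>n. AA n < 1/4) sequentially"
    using order_tendstoD(2)[OF AAl, of "1/4"] by simp
  obtain n where n: "Mx (Fiter eta d n z) < 1/4" "AA n < 1/4"
    using eventually_happens[OF eventually_conj[OF e1 e2]] by auto
  define D where "D = real d ^ n"
  have D: "D > 0" unfolding D_def by (rule dpos)
  have "ln (max (AA n) (Mx (Fiter eta d n z))) \<le> ln (1/4)"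
    using n AA_pos[of n] by (subst ln_le_cancel_iff) auto
  also have "ln (1/4::real) = - 2 * ln 2"
    by (simp add: ln_div ln_realpow[of 2 2, simplified])
  finally have l: "ln (max (AA n) (Mx (Fiter eta d n z))) \<le> - 2 * ln 2" .
  have t: "ln 2 / ((real d - 1) * D) \<le> ln 2 / D"
    using d2 D by (intro divide_left_mono mult_pos_pos) auto
  have "phi z \<le> phin n z" by (rule phi_le)
  also have "\<dots> = ln (max (AA n) (Mx (Fiter eta d n z))) / D + ln 2 / ((real d - 1) * D)"
    unfolding phin_def psi_def D_def ..
  also have "\<dots> \<le> - 2 * ln 2 / D + ln 2 / D"
    using l t D by (intro add_mono divide_right_mono) auto
  also have "\<dots> < 0" using D by (simp add: field_simps)
  finally show "z \<in> {z. phi z < 0}" by simp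
next
  fix z :: "complex^('k::{finite,linorder})"
  assume zp: "z \<in> {z. phi z < 0}"
  show "z \<in> basin eta d"
  proof (rule ccontr)
    assume nz: "z \<notin> basin eta d"
    obtain N where g: "good TYPE('k) N" using good_ex by blast
    define c where "c = rr TYPE('k) / real CARD('k)"
    have c: "c > 0" unfolding c_def using rr_pos[where 'k='k] by simp
    have lb: "ln c / real d ^ n \<le> phin n z" if "n \<ge> N" for n
    proof -
      have "norm (Fiter eta d n z) \<ge> rr TYPE('k)" using nz basin_iff[OF g, of z] that by force
      then have "c \<le> Mx (Fiter eta d n z)"
        using norm_le_Mx[of "Fiter eta d n z"] unfolding c_def by (simp add: field_simps)
      then have "ln c \<le> ln (max (AA n) (Mx (Fiter eta d n z)))" using c by (subst ln_le_cancel_iff) auto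
      then have "ln c / real d ^ n \<le> psi n z" unfolding psi_def using dpos[of n] by (intro divide_right_mono) auto
      then show ?thesis unfolding phin_def using tail_pos[of n] by linarith
    qed
    have "(\<lambda>n. ln c / real d ^ n) \<longlonglongrightarrow> 0" using d2 by (intro LIMSEQ_divide_realpow_zero) simp
    then have "0 \<le> phi z" by (rule LIMSEQ_le[OF _ phin_lim]) (use lb in blast)
    with zp show False by simp
  qed
qed

end

theorem theorem3p1:
  fixes eta :: "nat \<Rightarrow> complex" and a :: real and d :: nat
  assumes "CARD('k::{finite,linorder}) \<ge> 2"
    and "0 < a" and "a < 1" and "d \<ge> 2"
    and "\<And>n. eta n \<noteq> 0"
    and "\<And>n. cmod (eta n) \<le> a ^ (d ^ n)"
  shows "(open (basin eta d :: (complex^('k::{finite,linorder})) set) \<and> connected (basin eta d :: (complex^('k::{finite,linorder})) set)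
            \<and> (basin eta d :: (complex^('k::{finite,linorder})) set) \<noteq> {})
       \<and> (\<exists>\<Omega>j :: nat \<Rightarrow> (complex^('k::{finite,linorder})) set.
            (basin eta d = (\<Union>j\<in>{1..}. \<Omega>j j)) \<and> (\<forall>j\<ge>1. \<Omega>j j \<subseteq> \<Omega>j (Suc j))
            \<and> (\<forall>j\<ge>1. biholomorphic (\<Omega>j j) (ball (0::complex^('k::{finite,linorder})) 1)))
       \<and> (\<forall>z\<in>(basin eta d :: (complex^('k::{finite,linorder})) set). \<forall>v. kobayashi (basin eta d) z v = 0)
       \<and> (\<exists>\<phi> :: complex^('k::{finite,linorder}) \<Rightarrow> real. psh \<phi> \<and> (\<forall>z. \<phi> z \<ge> ln a)
            \<and> basin eta d = {z. \<phi> z < 0})"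
proof -
  interpret D: dyn eta a d using assms by unfold_locales auto
  have p12: "(open (basin eta d :: (complex^('k::{finite,linorder})) set) \<and> connected (basin eta d :: (complex^('k::{finite,linorder})) set)
            \<and> (basin eta d :: (complex^('k::{finite,linorder})) set) \<noteq> {})
       \<and> (\<exists>\<Omega>j :: nat \<Rightarrow> (complex^('k::{finite,linorder})) set.
            (basin eta d = (\<Union>j\<in>{1..}. \<Omega>j j)) \<and> (\<forall>j\<ge>1. \<Omega>j j \<subseteq> \<Omega>j (Suc j))
            \<and> (\<forall>j\<ge>1. biholomorphic (\<Omega>j j) (ball (0::complex^('k::{finite,linorder})) 1)))"
    by (rule D.part12)
  have p3: "\<forall>z\<in>(basin eta d :: (complex^('k::{finite,linorder})) set). \<forall>v. kobayashi (basin eta d) z v = 0"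
    using D.part3 by blast
  have p4: "\<exists>\<phi> :: complex^('k::{finite,linorder}) \<Rightarrow> real. psh \<phi> \<and> (\<forall>z. \<phi> z \<ge> ln a)
            \<and> basin eta d = {z. \<phi> z < 0}"
    by (rule exI[of _ D.phi]) (use D.phi_psh D.phi_lower D.basin_phi in blast)
  show ?thesis using p12 p3 p4 by blast
qed


end
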